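(* Let $1<p<q<\infty$. Let $(\mathcal{A},\xi_0)$ be a tree rooted at $\xi_0$ with finite or countable vertex set, and let $u,w:\mathbf{V}(\mathcal{A})\to[0,\infty)$ satisfy $u(\xi)=u_j$, $w(\xi)=w_j$ for all $\xi\in\mathbf{V}_j^{\mathcal{A}}(\xi_0)$, $j\in\mathbb{Z}_+$, for some nonnegative numbers $u_j,w_j$. Suppose there exist a number $C_*\ge1$, numbers $R_0\ge R>1$, and a function $S:\mathbb{Z}_+\to(0,\infty)$ such that (i) $C_*^{-1}\frac{S(j')}{S(j)}\le \operatorname{card}\mathbf{V}^{\mathcal{A}}_{j'-j}(\xi)\le C_*\frac{S(j')}{S(j)}$ for all $j\in\mathbb{Z}_+$, all $\xi\in\mathbf{V}^{\mathcal{A}}_j(\xi_0)$ and all $j'\ge j$; (ii) $S(0)=1$; (iii) $R_0\ge \frac{S(j+1)}{S(j)}\ge R$ for all $j\in\mathbb{Z}_+$. Let $\hat{\mathfrak{S}}^{p,q}_{\mathcal{A},u,w}\in[0,\infty]$ be the operator norm of $S_{u,w,\mathcal{A}}f(\xi)=w(\xi)\sum_{\xi'\le\xi}u(\xi')f(\xi')$ from $l_q(l_p(\mathcal{A}))$ to $l_q(\mathcal{A})$. Then $$\hat{\mathfrak{S}}^{p,q}_{\mathcal{A},u,w}\asymp \sup_{j\in\mathbb{Z}_+}u_j\Big(\sum_{i\ge j}w_i^q\frac{S(i)}{S(j)}\Big)^{1/q}\asymp\sup_{\xi\in\mathbf{V}(\mathcal{A})}u(\xi)\|w\|_{l_q(\mathcal{A}_\xi)},$$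 where $A\asymp B$ means there are constants $c_1,c_2>0$ depending only on $p,q,C_*,R,R_0$ with $c_1B\le A\le c_2B$ (both sides possibly infinite).
   Context: Graphs have no loops or multiple edges. Partial order on $\mathbf{V}(\mathcal{A})$: $\xi'>\xi$ if there is a simple path $(\xi_0,\xi_1,\dots,\xi_n,\xi')$ with $\xi=\xi_k$ for some $k\in\{0,\dots,n\}$, and then the distance is $\rho(\xi,\xi')=n+1-k$; $\rho(\xi,\xi)=0$; $\xi'\ge\xi$ means $\xi'>\xi$ or $\xi'=\xi$. For $j\in\mathbb{Z}_+$ and $\xi\in\mathbf{V}(\mathcal{A})$, $\mathbf{V}^{\mathcal{A}}_j(\xi)=\{\xi'\ge\xi:\rho(\xi,\xi')=j\}$. $\mathcal{A}_\xi$ is the subtree with vertex set $\{\xi'\ge\xi\}$. $\|g\|_{l_q(\mathcal{G})}=\big(\sum_{\xi\in\mathbf{V}(\mathcal{G})}|g(\xi)|^q\big)^{1/q}$, and $l_q(\mathcal{A})$ is the space of $g:\mathbf{V}(\mathcal{A})\to\mathbb{R}$ with finite norm. The mixed norm is $\|f\|_{l_q(l_p(\mathcal{A}))}=\Big(\sum_{j=0}^\infty\Big(\sum_{\xi\in\mathbf{V}_j^{\mathcal{A}}(\xi_0)}|f(\xi)|^p\Big)^{q/p}\Big)^{1/q}$, and $l_q(l_p(\mathcal{A}))$ is the space of functions with finite such norm; the operator norm is the minimal $C$ with $\|S_{u,w,\mathcal{A}}f\|_{l_q(\mathcal{A})}\le C\|f\|_{l_q(l_p(\mathcal{A}))}$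 for all $f$. *)

theory Defs
  imports "HOL-Analysis.Analysis"
begin

text \<open>A rooted tree with vertex set V (a subset of nat, i.e. finite or countable),
root r, encoded by its parent map: every vertex reaches the root by iterating parent,
and the root is its own parent (convention).\<close>

definition rooted_tree :: "nat set \<Rightarrow> (nat \<Rightarrow> nat) \<Rightarrow> nat \<Rightarrow> bool" where
  "rooted_tree V par r \<longleftrightarrow> r \<in> V \<and> par r = r \<and>
     (\<forall>v\<in>V. v \<noteq> r \<longrightarrow> par v \<in> V) \<and> (\<forall>v\<in>V. \<exists>n. (par ^^ n) v = r)"

definition depth :: "(nat \<Rightarrow> nat) \<Rightarrow> nat \<Rightarrow> nat \<Rightarrow> nat" where
  "depth par r v = (LEAST n. (par ^^ n) v = r)"

definition desc :: "nat set \<Rightarrow> (nat \<Rightarrow> nat) \<Rightarrow> nat \<Rightarrow> nat \<Rightarrow> nat \<Rightarrow> nat set" where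
  "desc V par r \<xi> j = {\<xi>'\<in>V. depth par r \<xi>' = depth par r \<xi> + j \<and> (par ^^ j) \<xi>' = \<xi>}"

definition subtree :: "nat set \<Rightarrow> (nat \<Rightarrow> nat) \<Rightarrow> nat \<Rightarrow> nat \<Rightarrow> nat set" where
  "subtree V par r \<xi> = (\<Union>j. desc V par r \<xi> j)"

definition ancestors :: "(nat \<Rightarrow> nat) \<Rightarrow> nat \<Rightarrow> nat \<Rightarrow> nat set" where
  "ancestors par r \<xi> = {(par ^^ k) \<xi> | k. k \<le> depth par r \<xi>}"

definition hardy_op :: "(nat \<Rightarrow> nat) \<Rightarrow> nat \<Rightarrow> (nat \<Rightarrow> real) \<Rightarrow> (nat \<Rightarrow> real)
    \<Rightarrow> (nat \<Rightarrow> real) \<Rightarrow> nat \<Rightarrow> real" where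
  "hardy_op par r u w f \<xi> = w \<xi> * (\<Sum>\<xi>'\<in>ancestors par r \<xi>. u \<xi>' * f \<xi>')"

definition enn_powr :: "ennreal \<Rightarrow> real \<Rightarrow> ennreal" where
  "enn_powr x a = (if x = top then top else ennreal (enn2real x powr a))"

definition lq_norm :: "nat set \<Rightarrow> real \<Rightarrow> (nat \<Rightarrow> real) \<Rightarrow> ennreal" where
  "lq_norm G q g = enn_powr (\<Sum>\<^sub>\<infinity>\<xi>\<in>G. ennreal (\<bar>g \<xi>\<bar> powr q)) (1 / q)"

definition mixed_norm :: "nat set \<Rightarrow> (nat \<Rightarrow> nat) \<Rightarrow> nat \<Rightarrow> real \<Rightarrow> real \<Rightarrow> (nat \<Rightarrow> real) \<Rightarrow> ennreal" where
  "mixed_norm V par r p q f =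
     enn_powr (\<Sum>\<^sub>\<infinity>j\<in>(UNIV::nat set).
        enn_powr (\<Sum>\<^sub>\<infinity>\<xi>\<in>desc V par r r j. ennreal (\<bar>f \<xi>\<bar> powr p)) (q / p)) (1 / q)"

definition op_norm :: "nat set \<Rightarrow> (nat \<Rightarrow> nat) \<Rightarrow> nat \<Rightarrow> real \<Rightarrow> real \<Rightarrow> (nat \<Rightarrow> real)
    \<Rightarrow> (nat \<Rightarrow> real) \<Rightarrow> ennreal" where
  "op_norm V par r p q u w = Inf {C. \<forall>f. mixed_norm V par r p q f < top \<longrightarrow>
       lq_norm V q (hardy_op par r u w f) \<le> C * mixed_norm V par r p q f}"

end

theory Submission
  imports Defs
begin

lemma powr_eq_zero_iff_real: "(x::real) powr a = 0 \<longleftrightarrow> x = 0"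
  by simp

lemma holder_sum:
  fixes a b :: "'i \<Rightarrow> real"
  assumes fin: "finite I" and a: "\<And>i. i \<in> I \<Longrightarrow> a i \<ge> 0" and b: "\<And>i. i \<in> I \<Longrightarrow> b i \<ge> 0"
    and P: "P > 1" and Q: "Q > 1" and PQ: "1/P + 1/Q = 1"
  shows "(\<Sum>i\<in>I. a i * b i) \<le> (\<Sum>i\<in>I. a i powr P) powr (1/P) * (\<Sum>i\<in>I. b i powr Q) powr (1/Q)"
proof -
  define A where "A = (\<Sum>i\<in>I. a i powr P)"
  define B where "B = (\<Sum>i\<in>I. b i powr Q)"
  have A0: "A \<ge> 0" "B \<ge> 0" unfolding A_def B_def by (auto intro: sum_nonneg)
  show ?thesis
  proof (cases "A = 0 \<or> B = 0")
    case True
    then have "\<forall>i\<in>I. a i * b i = 0"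
      using fin a b unfolding A_def B_def
      by (auto simp: sum_nonneg_eq_0_iff)
    then have "(\<Sum>i\<in>I. a i * b i) = 0" by (intro sum.neutral) auto
    then show ?thesis by simp
  next
    case False
    then have Ap: "A > 0" "B > 0" using A0 by auto
    define \<alpha> where "\<alpha> = A powr (1/P)"
    define \<beta> where "\<beta> = B powr (1/Q)"
    have ab: "\<alpha> > 0" "\<beta> > 0" using Ap unfolding \<alpha>_def \<beta>_def by auto
    have aP: "\<alpha> powr P = A" unfolding \<alpha>_def using Ap P by (simp add: powr_powr)
    have bQ: "\<beta> powr Q = B" unfolding \<beta>_def using Ap Q by (simp add: powr_powr)
    have "\<And>i. i \<in> I \<Longrightarrow> (a i / \<alpha>) * (b i / \<beta>) \<le> a i powr P / (A * P) + b i powr Q / (B * Q)"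
    proof -
      fix i assume i: "i \<in> I"
      have "(a i / \<alpha>) * (b i / \<beta>) \<le> (a i / \<alpha>) powr P / P + (b i / \<beta>) powr Q / Q"
        by (rule Youngs_inequality) (use P Q PQ a b i ab in auto)
      also have "\<dots> = a i powr P / (A * P) + b i powr Q / (B * Q)"
        by (simp add: powr_divide aP bQ)
      finally show "(a i / \<alpha>) * (b i / \<beta>) \<le> a i powr P / (A * P) + b i powr Q / (B * Q)" .
    qed
    then have "(\<Sum>i\<in>I. (a i / \<alpha>) * (b i / \<beta>)) \<le> (\<Sum>i\<in>I. a i powr P / (A * P) + b i powr Q / (B * Q))"
      by (rule sum_mono)
    also have "\<dots> = A / (A * P) + B / (B * Q)"
      unfolding sum.distrib A_def B_def by (simp add: sum_divide_distrib)
    also have "\<dots> = 1" using Ap P Q PQ by simp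
    finally have "(\<Sum>i\<in>I. a i * b i) / (\<alpha> * \<beta>) \<le> 1"
      by (simp add: sum_divide_distrib)
    then show ?thesis using ab unfolding \<alpha>_def \<beta>_def A_def B_def
      by (simp add: divide_le_eq)
  qed
qed

lemma power_mean_sum:
  fixes \<alpha> y :: "'i \<Rightarrow> real"
  assumes fin: "finite I" and a: "\<And>i. i \<in> I \<Longrightarrow> \<alpha> i \<ge> 0" and y: "\<And>i. i \<in> I \<Longrightarrow> y i \<ge> 0"
    and r: "r > 1"
  shows "(\<Sum>i\<in>I. \<alpha> i * y i) powr r \<le> (\<Sum>i\<in>I. \<alpha> i) powr (r - 1) * (\<Sum>i\<in>I. \<alpha> i * y i powr r)"
proof -
  define r' where "r' = r / (r - 1)"
  have r': "r' > 1" "1/r' + 1/r = 1" using r unfolding r'_def by (auto simp: field_simps)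
  have eq: "\<And>i. i \<in> I \<Longrightarrow> \<alpha> i * y i = \<alpha> i powr (1/r') * (\<alpha> i powr (1/r) * y i)"
  proof -
    fix i assume i: "i \<in> I"
    have "\<alpha> i powr (1/r') * \<alpha> i powr (1/r) = \<alpha> i powr (1/r' + 1/r)" by (simp add: powr_add)
    also have "\<dots> = \<alpha> i" using r' a[OF i] by simp
    finally show "\<alpha> i * y i = \<alpha> i powr (1/r') * (\<alpha> i powr (1/r) * y i)" by (simp add: mult.assoc)
  qed
  have "(\<Sum>i\<in>I. \<alpha> i * y i) = (\<Sum>i\<in>I. \<alpha> i powr (1/r') * (\<alpha> i powr (1/r) * y i))"
    using eq by (rule sum.cong[OF refl])
  also have "\<dots> \<le> (\<Sum>i\<in>I. (\<alpha> i powr (1/r')) powr r') powr (1/r') * (\<Sum>i\<in>I. (\<alpha> i powr (1/r) * y i) powr r) powr (1/r)"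
    by (rule holder_sum) (use fin y r r' in auto)
  also have "\<dots> = (\<Sum>i\<in>I. \<alpha> i) powr (1/r') * (\<Sum>i\<in>I. \<alpha> i * y i powr r) powr (1/r)"
  proof -
    have "\<And>i. i \<in> I \<Longrightarrow> (\<alpha> i powr (1/r')) powr r' = \<alpha> i" using r' a by (simp add: powr_powr)
    moreover have "\<And>i. i \<in> I \<Longrightarrow> (\<alpha> i powr (1/r) * y i) powr r = \<alpha> i * y i powr r"
      using r a by (simp add: powr_mult powr_powr)
    ultimately show ?thesis by simp
  qed
  finally have le: "(\<Sum>i\<in>I. \<alpha> i * y i) \<le> (\<Sum>i\<in>I. \<alpha> i) powr (1/r') * (\<Sum>i\<in>I. \<alpha> i * y i powr r) powr (1/r)" .
  have nn: "0 \<le> (\<Sum>i\<in>I. \<alpha> i * y i)" using a y by (auto intro: sum_nonneg)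
  have "(\<Sum>i\<in>I. \<alpha> i * y i) powr r \<le> ((\<Sum>i\<in>I. \<alpha> i) powr (1/r') * (\<Sum>i\<in>I. \<alpha> i * y i powr r) powr (1/r)) powr r"
    by (rule powr_mono2) (use r nn le in auto)
  also have "\<dots> = (\<Sum>i\<in>I. \<alpha> i) powr (r - 1) * (\<Sum>i\<in>I. \<alpha> i * y i powr r)"
  proof -
    have s1: "0 \<le> (\<Sum>i\<in>I. \<alpha> i)" using a by (auto intro: sum_nonneg)
    have s2: "0 \<le> (\<Sum>i\<in>I. \<alpha> i * y i powr r)" using a by (auto intro: sum_nonneg)
    have "1 / r' * r = r - 1" using r unfolding r'_def by (simp add: field_simps)
    then show ?thesis using r s1 s2 by (simp add: powr_mult powr_powr)
  qed
  finally show ?thesis .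
qed

lemma powr_self_le: "0 \<le> t \<Longrightarrow> t \<le> 1 \<Longrightarrow> 0 < s \<Longrightarrow> s \<le> 1 \<Longrightarrow> t \<le> (t::real) powr s"
  using powr_mono'[of s 1 t] by simp

lemma powr_subadd2:
  fixes x y s :: real
  assumes "x \<ge> 0" "y \<ge> 0" "0 < s" "s \<le> 1"
  shows "(x + y) powr s \<le> x powr s + y powr s"
proof (cases "x + y = 0")
  case True then show ?thesis using assms by simp
next
  case False
  then have t: "x + y > 0" using assms by simp
  have "x / (x+y) \<le> (x/(x+y)) powr s"
    using assms t by (intro powr_self_le) auto
  moreover have "y / (x+y) \<le> (y/(x+y)) powr s"
    using assms t by (intro powr_self_le) auto
  moreover have "x/(x+y) + y/(x+y) = 1" using t by (simp add: add_divide_distrib[symmetric])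
  ultimately have "1 \<le> (x/(x+y)) powr s + (y/(x+y)) powr s"
    by linarith
  also have "\<dots> = (x powr s + y powr s) / (x+y) powr s"
    by (simp add: powr_divide add_divide_distrib)
  finally show ?thesis using t by (simp add: le_divide_eq)
qed

lemma powr_subadd_sum:
  fixes x :: "'i \<Rightarrow> real"
  assumes "finite I" "\<And>i. i \<in> I \<Longrightarrow> x i \<ge> 0" "0 < s" "s \<le> 1"
  shows "(\<Sum>i\<in>I. x i) powr s \<le> (\<Sum>i\<in>I. x i powr s)"
  using assms
proof (induction I rule: finite_induct)
  case empty then show ?case by simp
next
  case (insert a F)
  have "(\<Sum>i\<in>insert a F. x i) powr s = (x a + (\<Sum>i\<in>F. x i)) powr s"
    using insert by simp
  also have "\<dots> \<le> x a powr s + (\<Sum>i\<in>F. x i) powr s"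
    by (rule powr_subadd2) (use insert in \<open>auto intro: sum_nonneg\<close>)
  also have "\<dots> \<le> x a powr s + (\<Sum>i\<in>F. x i powr s)"
    using insert by auto
  finally show ?case using insert by simp
qed

lemma powr_mvt_ineq:
  fixes x y q :: real
  assumes "0 \<le> y" "y \<le> x" "q \<ge> 1"
  shows "x powr q - y powr q \<le> q * x powr (q - 1) * (x - y)"
proof (cases "y = x")
  case True then show ?thesis by simp
next
  case False
  then have yx: "y < x" using assms by simp
  show ?thesis
  proof (cases "y = 0")
    case True
    have "x powr q = x powr (q-1) * x" using powr_add[of x "q-1" 1] yx True by simp
    also have "\<dots> \<le> q * x powr (q-1) * x" using assms yx True by (simp add: mult_right_mono)
    finally show ?thesis using True assms by simp
  next
    case False
    then have y0: "y > 0" using assms by simp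
    have "\<exists>z>y. z < x \<and> x powr q - y powr q = (x - y) * (q * z powr (q - 1))"
      using yx y0 by (intro MVT2) (auto intro!: has_real_derivative_powr)
    then obtain z where z: "y < z" "z < x" "x powr q - y powr q = (x - y) * (q * z powr (q - 1))" by blast
    have "z powr (q-1) \<le> x powr (q-1)" using z y0 assms by (intro powr_mono2) auto
    then have "(x - y) * (q * z powr (q - 1)) \<le> (x - y) * (q * x powr (q - 1))"
      using yx assms by (intro mult_left_mono) auto
    then show ?thesis using z by (simp add: algebra_simps)
  qed
qed

lemma sum_triangle_swap:
  "(\<Sum>k\<le>(N::nat). \<Sum>j\<le>k. g k j) = (\<Sum>j\<le>N. \<Sum>k\<in>{j..N}. g k j)"
proof -
  have "(\<Sum>k\<le>N. \<Sum>j\<le>k. g k j) = (\<Sum>k\<in>{..N}. \<Sum>j\<in>{y. y \<in> {..N} \<and> y \<le> k}. g k j)"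
    by (intro sum.cong) auto
  also have "\<dots> = (\<Sum>j\<in>{..N}. \<Sum>k\<in>{x. x \<in> {..N} \<and> j \<le> x}. g k j)"
    by (rule sum.swap_restrict) auto
  also have "\<dots> = (\<Sum>j\<le>N. \<Sum>k\<in>{j..N}. g k j)"
    by (intro sum.cong) auto
  finally show ?thesis .
qed

lemma geo_sum_rev_le:
  fixes \<beta> :: real
  assumes "0 \<le> \<beta>" "\<beta> < 1"
  shows "(\<Sum>j\<le>k. \<beta> ^ (k - j)) \<le> 1 / (1 - \<beta>)"
proof -
  have "(\<Sum>j\<le>k. \<beta> ^ (k - j)) = (\<Sum>m\<le>k. \<beta> ^ m)"
    by (rule sum.reindex_bij_witness[where i="\<lambda>m. k - m" and j="\<lambda>j. k - j"]) auto
  moreover have "(1 - \<beta>) * (\<Sum>m\<le>k. \<beta> ^ m) = 1 - \<beta> ^ Suc k" by (rule sum_gp_basic)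
  moreover have "\<beta> ^ Suc k \<ge> 0" using assms by simp
  ultimately have "(1 - \<beta>) * (\<Sum>j\<le>k. \<beta> ^ (k - j)) \<le> 1" by simp
  then show ?thesis using assms by (simp add: le_divide_eq mult.commute)
qed

lemma geo_double_sum:
  fixes \<beta> :: real and h :: "nat \<Rightarrow> real"
  assumes "0 \<le> \<beta>" "\<beta> < 1" "\<And>j. h j \<ge> 0"
  shows "(\<Sum>k\<le>N. \<Sum>j\<le>k. \<beta> ^ (k - j) * h j) \<le> 1 / (1 - \<beta>) * (\<Sum>j\<le>N. h j)"
proof -
  have "(\<Sum>k\<le>N. \<Sum>j\<le>k. \<beta> ^ (k - j) * h j) = (\<Sum>j\<le>N. (\<Sum>k\<in>{j..N}. \<beta> ^ (k - j)) * h j)"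
    by (simp add: sum_triangle_swap sum_distrib_right)
  also have "\<dots> \<le> (\<Sum>j\<le>N. 1 / (1 - \<beta>) * h j)"
  proof (rule sum_mono)
    fix j assume "j \<in> {..N}"
    have "(\<Sum>k\<in>{j..N}. \<beta> ^ (k - j)) = (\<Sum>m\<le>N - j. \<beta> ^ (N - j - m))"
      by (rule sum.reindex_bij_witness[where i="\<lambda>m. N - m" and j="\<lambda>k. N - k"])
         (use \<open>j \<in> {..N}\<close> in auto)
    also have "\<dots> \<le> 1 / (1 - \<beta>)" by (rule geo_sum_rev_le) (use assms in auto)
    finally show "(\<Sum>k\<in>{j..N}. \<beta> ^ (k - j)) * h j \<le> 1 / (1 - \<beta>) * h j"
      using assms by (intro mult_right_mono) auto
  qed
  also have "\<dots> = 1 / (1 - \<beta>) * (\<Sum>j\<le>N. h j)" by (simp add: sum_distrib_left)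
  finally show ?thesis .
qed


locale tree_setting =
  fixes V :: "nat set" and par :: "nat \<Rightarrow> nat" and r :: nat
  assumes tree: "rooted_tree V par r"
begin

abbreviation dep where "dep \<equiv> depth par r"
abbreviation L where "L i \<equiv> desc V par r r i"

lemma rV: "r \<in> V" and par_r: "par r = r"
  and parV: "v \<in> V \<Longrightarrow> v \<noteq> r \<Longrightarrow> par v \<in> V"
  and reach: "v \<in> V \<Longrightarrow> \<exists>n. (par ^^ n) v = r"
  using tree unfolding rooted_tree_def by auto

lemma dep_reach: "v \<in> V \<Longrightarrow> (par ^^ dep v) v = r"
  unfolding depth_def using reach by (rule LeastI_ex)

lemma dep_least: "(par ^^ n) v = r \<Longrightarrow> dep v \<le> n"
  unfolding depth_def by (rule Least_le)

lemma funpow_r: "(par ^^ n) r = r"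
  by (induction n) (auto simp: par_r)

lemma dep_r: "dep r = 0"
  using dep_least[of 0 r] by simp

lemma reach_ge: "v \<in> V \<Longrightarrow> dep v \<le> n \<Longrightarrow> (par ^^ n) v = r"
proof -
  assume v: "v \<in> V" and n: "dep v \<le> n"
  have "(par ^^ n) v = (par ^^ (n - dep v) \<circ> par ^^ dep v) v"
    using n by (simp add: funpow_add[symmetric])
  also have "\<dots> = r" using dep_reach[OF v] by (simp add: funpow_r)
  finally show ?thesis .
qed

lemma dep_par: assumes v: "v \<in> V" "v \<noteq> r" shows "dep v = Suc (dep (par v))" "par v \<in> V"
proof -
  show pv: "par v \<in> V" using parV v by auto
  have "dep v \<noteq> 0" using dep_reach[OF v(1)] v by (metis funpow_0)
  then obtain m where m: "dep v = Suc m" by (cases "dep v") auto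
  have "(par ^^ m) (par v) = r" using dep_reach[OF v(1)] m funpow_Suc_right[of m par] by (metis comp_apply)
  then have le: "dep (par v) \<le> m" by (rule dep_least)
  have "(par ^^ Suc (dep (par v))) v = r" using dep_reach[OF pv] funpow_Suc_right[of "dep (par v)" par] by (metis comp_apply)
  then have "dep v \<le> Suc (dep (par v))" by (rule dep_least)
  with le m show "dep v = Suc (dep (par v))" by simp
qed

lemma anc: "v \<in> V \<Longrightarrow> k \<le> dep v \<Longrightarrow> (par ^^ k) v \<in> V \<and> dep ((par ^^ k) v) = dep v - k"
proof (induction k)
  case 0 then show ?case by simp
next
  case (Suc k)
  then have IH: "(par ^^ k) v \<in> V" "dep ((par ^^ k) v) = dep v - k" by auto
  have ne: "(par ^^ k) v \<noteq> r"
  proof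
    assume "(par ^^ k) v = r"
    then have "dep v \<le> k" by (rule dep_least)
    with Suc show False by simp
  qed
  have "(par ^^ Suc k) v = par ((par ^^ k) v)" by simp
  then show ?case using dep_par[OF IH(1) ne] IH Suc by simp
qed

lemma L_eq: "L i = {v \<in> V. dep v = i}"
  unfolding desc_def using reach_ge dep_r by auto

lemma desc_sub_L: "desc V par r \<xi> m \<subseteq> L (dep \<xi> + m)"
  unfolding L_eq by (auto simp: desc_def)

lemma group_sum:
  fixes \<phi> :: "nat \<Rightarrow> 'a::comm_semiring_1"
  assumes fin: "finite (L i)" and finK: "finite (L k)" and ki: "k \<le> i"
  shows "(\<Sum>\<eta>\<in>L i. \<phi> ((par ^^ (i - k)) \<eta>)) = (\<Sum>\<xi>\<in>L k. \<phi> \<xi> * of_nat (card (desc V par r \<xi> (i - k))))"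
proof -
  let ?g = "par ^^ (i - k)"
  have img: "?g ` L i \<subseteq> L k"
    using anc ki unfolding L_eq by auto
  have "(\<Sum>\<eta>\<in>L i. \<phi> (?g \<eta>)) = (\<Sum>\<xi>\<in>L k. \<Sum>\<eta>\<in>{x. x \<in> L i \<and> ?g x = \<xi>}. \<phi> (?g \<eta>))"
    by (rule sum.group[OF fin finK img, symmetric])
  also have "\<dots> = (\<Sum>\<xi>\<in>L k. \<phi> \<xi> * of_nat (card (desc V par r \<xi> (i - k))))"
  proof (rule sum.cong[OF refl])
    fix \<xi> assume \<xi>: "\<xi> \<in> L k"
    have eq: "{x. x \<in> L i \<and> ?g x = \<xi>} = desc V par r \<xi> (i - k)"
      using \<xi> ki unfolding L_eq by (auto simp: desc_def)
    have "(\<Sum>\<eta>\<in>{x. x \<in> L i \<and> ?g x = \<xi>}. \<phi> (?g \<eta>)) = (\<Sum>\<eta>\<in>{x. x \<in> L i \<and> ?g x = \<xi>}. \<phi> \<xi>)"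
      by (rule sum.cong) auto
    also have "\<dots> = \<phi> \<xi> * of_nat (card (desc V par r \<xi> (i - k)))"
      by (simp add: eq mult.commute)
    finally show "(\<Sum>\<eta>\<in>{x. x \<in> L i \<and> ?g x = \<xi>}. \<phi> (?g \<eta>)) = \<phi> \<xi> * of_nat (card (desc V par r \<xi> (i - k)))" .
  qed
  finally show ?thesis .
qed

lemma ancestors_eq: "\<xi> \<in> V \<Longrightarrow> ancestors par r \<xi> = (\<lambda>k. (par ^^ k) \<xi>) ` {..dep \<xi>}"
  unfolding ancestors_def by auto

lemma ancestors_inj: "\<xi> \<in> V \<Longrightarrow> inj_on (\<lambda>k. (par ^^ k) \<xi>) {..dep \<xi>}"
proof (rule inj_onI)
  fix a b assume \<xi>: "\<xi> \<in> V" and ab: "a \<in> {..dep \<xi>}" "b \<in> {..dep \<xi>}" "(par ^^ a) \<xi> = (par ^^ b) \<xi>"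
  then have "dep ((par ^^ a) \<xi>) = dep ((par ^^ b) \<xi>)" by simp
  then show "a = b" using anc[OF \<xi>, of a] anc[OF \<xi>, of b] ab by auto
qed

lemma ancestors_sum:
  assumes \<xi>: "\<xi> \<in> V"
  shows "(\<Sum>x\<in>ancestors par r \<xi>. h x) = (\<Sum>j\<le>dep \<xi>. h ((par ^^ (dep \<xi> - j)) \<xi>))"
proof -
  have "(\<Sum>x\<in>ancestors par r \<xi>. h x) = (\<Sum>k\<le>dep \<xi>. h ((par ^^ k) \<xi>))"
    unfolding ancestors_eq[OF \<xi>] by (rule sum.reindex[OF ancestors_inj[OF \<xi>], unfolded comp_def])
  also have "\<dots> = (\<Sum>j\<le>dep \<xi>. h ((par ^^ (dep \<xi> - j)) \<xi>))"
    by (rule sum.reindex_bij_witness[where i="\<lambda>j. dep \<xi> - j" and j="\<lambda>k. dep \<xi> - k"]) auto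
  finally show ?thesis .
qed

lemma finite_ancestors: "finite (ancestors par r \<xi>)"
  unfolding ancestors_def by simp

lemma subtree_sub: "subtree V par r \<xi> \<subseteq> V"
  unfolding subtree_def desc_def by auto

lemma subtree_anc: "\<eta> \<in> subtree V par r \<xi> \<Longrightarrow> \<xi> \<in> ancestors par r \<eta>"
  unfolding subtree_def desc_def ancestors_def by force

end

lemma powr_power_real: "0 \<le> (x::real) \<Longrightarrow> (x ^ n) powr a = (x powr a) ^ n"
  by (induction n) (auto simp: powr_mult)

locale consts_setting =
  fixes Cs R p q :: real
  assumes p1: "1 < p" and pq: "p < q" and Cs1: "Cs \<ge> 1" and R1: "R > 1"
begin
lemma q1: "q > 1" using p1 pq by simp
end

locale hardy_setting = tree_setting + consts_setting +
  fixes uj wj :: "nat \<Rightarrow> real" and S :: "nat \<Rightarrow> real"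
  assumes ujnn: "\<And>j. uj j \<ge> 0" and wjnn: "\<And>j. wj j \<ge> 0"
    and Spos: "\<And>j. S j > 0"
    and card_bds: "\<And>j \<xi> j'. \<xi> \<in> L j \<Longrightarrow> j \<le> j' \<Longrightarrow>
          S j' / (Cs * S j) \<le> real (card (desc V par r \<xi> (j' - j))) \<and>
          real (card (desc V par r \<xi> (j' - j))) \<le> Cs * S j' / S j"
    and S0: "S 0 = 1"
    and ratio: "\<And>j. R \<le> S (Suc j) / S j"
begin


lemma finL: "finite (L i)"
proof -
  have r0: "r \<in> L 0" unfolding L_eq using rV dep_r by simp
  have "S i / (Cs * S 0) \<le> real (card (desc V par r r (i - 0)))"
    using card_bds[OF r0, of i] by simp
  moreover have "S i / (Cs * S 0) > 0" using Spos Cs1 by simp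
  ultimately have "card (L i) > 0" by simp
  then show ?thesis using card_gt_0_iff by blast
qed

lemma L_ne: "L i \<noteq> {}"
proof -
  have r0: "r \<in> L 0" unfolding L_eq using rV dep_r by simp
  have "S i / (Cs * S 0) \<le> real (card (desc V par r r (i - 0)))"
    using card_bds[OF r0, of i] by simp
  moreover have "S i / (Cs * S 0) > 0" using Spos Cs1 by simp
  ultimately have "card (L i) > 0" by simp
  then show ?thesis by auto
qed

lemma card_le: "\<xi> \<in> L k \<Longrightarrow> k \<le> i \<Longrightarrow> real (card (desc V par r \<xi> (i - k))) \<le> Cs * S i / S k"
  using card_bds by blast

lemma card_ge: "\<xi> \<in> L k \<Longrightarrow> k \<le> i \<Longrightarrow> S i / (Cs * S k) \<le> real (card (desc V par r \<xi> (i - k)))"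
  using card_bds by blast

lemma S_growth: "j \<le> k \<Longrightarrow> S j / S k \<le> (1/R) ^ (k - j)"
proof (induction k)
  case 0 then show ?case by simp
next
  case (Suc k)
  show ?case
  proof (cases "j = Suc k")
    case True then show ?thesis using Spos by simp
  next
    case False
    then have jk: "j \<le> k" using Suc by simp
    have "S (Suc k) \<ge> R * S k" using ratio[of k] Spos[of k] by (simp add: le_divide_eq)
    then have "S j / S (Suc k) \<le> S j / (R * S k)"
      using Spos[of j] Spos[of k] Spos[of "Suc k"] R1 by (intro divide_left_mono) (auto intro: mult_pos_pos)
    also have "\<dots> = (1/R) * (S j / S k)" by simp
    also have "\<dots> \<le> (1/R) * (1/R) ^ (k - j)" using Suc.IH[OF jk] R1 by (intro mult_left_mono) auto
    also have "\<dots> = (1/R) ^ (Suc k - j)" using jk by (simp add: Suc_diff_le)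
    finally show ?thesis .
  qed
qed

definition P :: "(nat \<Rightarrow> real) \<Rightarrow> nat \<Rightarrow> real" where
  "P g \<eta> = (\<Sum>j\<le>dep \<eta>. uj j * g ((par ^^ (dep \<eta> - j)) \<eta>))"
definition D :: "(nat \<Rightarrow> real) \<Rightarrow> nat \<Rightarrow> real" where
  "D g \<xi> = P g \<xi> powr q - (P g \<xi> - uj (dep \<xi>) * g \<xi>) powr q"
definition T :: "nat \<Rightarrow> nat \<Rightarrow> real" where
  "T N k = (\<Sum>i\<in>{k..N}. wj i powr q * S i)"
definition K :: "(nat \<Rightarrow> real) \<Rightarrow> nat \<Rightarrow> real" where
  "K g \<xi> = (\<Sum>j\<le>dep \<xi>. (S j / S (dep \<xi>)) powr (1/q) * g ((par ^^ (dep \<xi> - j)) \<xi>))"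

lemma anc_L: "\<eta> \<in> L i \<Longrightarrow> k \<le> i \<Longrightarrow> (par ^^ (i - k)) \<eta> \<in> L k"
  using anc unfolding L_eq by auto

lemma anc_comp: "k \<le> i \<Longrightarrow> j \<le> k \<Longrightarrow> (par ^^ (k - j)) ((par ^^ (i - k)) \<eta>) = (par ^^ (i - j)) \<eta>"
proof -
  assume "k \<le> i" "j \<le> k"
  then have "i - j = (k - j) + (i - k)" by simp
  then show ?thesis by (simp add: funpow_add)
qed

lemma P_nonneg: "(\<And>x. g x \<ge> 0) \<Longrightarrow> P g \<eta> \<ge> 0"
  unfolding P_def using ujnn by (auto intro!: sum_nonneg)

lemma telescope:
  assumes \<eta>: "\<eta> \<in> L i"
  shows "P g \<eta> powr q = (\<Sum>k\<le>i. D g ((par ^^ (i - k)) \<eta>))"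
proof -
  define a where "a j = uj j * g ((par ^^ (i - j)) \<eta>)" for j
  define Q where "Q m = (\<Sum>j<m. a j) powr q" for m
  have di: "dep \<eta> = i" using \<eta> unfolding L_eq by simp
  have PD: "D g ((par ^^ (i - k)) \<eta>) = Q (Suc k) - Q k" if k: "k \<le> i" for k
  proof -
    let ?\<xi> = "(par ^^ (i - k)) \<eta>"
    have dx: "dep ?\<xi> = k" using anc_L[OF \<eta> k] unfolding L_eq by simp
    have Px: "P g ?\<xi> = (\<Sum>j\<le>k. a j)"
      unfolding P_def dx a_def using k by (intro sum.cong) (auto simp: anc_comp)
    have "P g ?\<xi> - uj (dep ?\<xi>) * g ?\<xi> = (\<Sum>j<k. a j)"
      unfolding Px dx a_def by (simp add: lessThan_Suc_atMost[symmetric])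
    then show ?thesis unfolding D_def Q_def Px by (simp add: lessThan_Suc_atMost[symmetric])
  qed
  have "(\<Sum>k\<le>i. D g ((par ^^ (i - k)) \<eta>)) = (\<Sum>k<Suc i. Q (Suc k) - Q k)"
    using PD by (simp add: lessThan_Suc_atMost)
  also have "\<dots> = Q (Suc i) - Q 0" by (rule sum_lessThan_telescope)
  also have "\<dots> = P g \<eta> powr q"
    unfolding Q_def P_def di a_def using q1 by (simp add: lessThan_Suc_atMost)
  finally show ?thesis by simp
qed

lemma D_bounds:
  assumes g: "\<And>x. g x \<ge> 0" and \<xi>: "\<xi> \<in> L k"
  shows "0 \<le> D g \<xi>" "D g \<xi> \<le> q * P g \<xi> powr (q - 1) * (uj k * g \<xi>)"
proof -
  have dx: "dep \<xi> = k" using \<xi> unfolding L_eq by simp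
  have Peq: "P g \<xi> = (\<Sum>j<k. uj j * g ((par ^^ (k - j)) \<xi>)) + uj k * g \<xi>"
    unfolding P_def dx by (simp add: lessThan_Suc_atMost[symmetric])
  have y0: "0 \<le> P g \<xi> - uj k * g \<xi>" using Peq g ujnn by (auto intro!: sum_nonneg)
  have yx: "P g \<xi> - uj k * g \<xi> \<le> P g \<xi>" using g ujnn by simp
  show "0 \<le> D g \<xi>" unfolding D_def dx using y0 yx q1 by (auto intro!: powr_mono2)
  show "D g \<xi> \<le> q * P g \<xi> powr (q - 1) * (uj k * g \<xi>)"
    unfolding D_def dx using powr_mvt_ineq[OF y0 yx] q1 by simp
qed

lemma sum_levels_le:
  assumes g: "\<And>x. g x \<ge> 0"
  shows "(\<Sum>i\<le>N. \<Sum>\<eta>\<in>L i. (wj i * P g \<eta>) powr q) \<le> Cs * (\<Sum>k\<le>N. \<Sum>\<xi>\<in>L k. D g \<xi> * T N k / S k)"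
proof -
  have lev: "(\<Sum>\<eta>\<in>L i. (wj i * P g \<eta>) powr q) \<le> (\<Sum>k\<le>i. \<Sum>\<xi>\<in>L k. wj i powr q * (D g \<xi> * (Cs * S i / S k)))" for i
  proof -
    have "(\<Sum>\<eta>\<in>L i. (wj i * P g \<eta>) powr q) = wj i powr q * (\<Sum>\<eta>\<in>L i. P g \<eta> powr q)"
      using wjnn P_nonneg[OF g] by (simp add: powr_mult sum_distrib_left)
    also have "\<dots> = wj i powr q * (\<Sum>\<eta>\<in>L i. \<Sum>k\<le>i. D g ((par ^^ (i - k)) \<eta>))"
      by (simp add: telescope)
    also have "\<dots> = wj i powr q * (\<Sum>k\<le>i. \<Sum>\<eta>\<in>L i. D g ((par ^^ (i - k)) \<eta>))"
      by (simp add: sum.swap[of _ "L i"])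
    also have "\<dots> = wj i powr q * (\<Sum>k\<le>i. \<Sum>\<xi>\<in>L k. D g \<xi> * real (card (desc V par r \<xi> (i - k))))"
      by (simp add: group_sum[OF finL finL])
    also have "\<dots> \<le> wj i powr q * (\<Sum>k\<le>i. \<Sum>\<xi>\<in>L k. D g \<xi> * (Cs * S i / S k))"
      by (intro mult_left_mono sum_mono) (auto intro!: mult_left_mono card_le D_bounds[OF g])
    also have "\<dots> = (\<Sum>k\<le>i. \<Sum>\<xi>\<in>L k. wj i powr q * (D g \<xi> * (Cs * S i / S k)))"
      by (simp add: sum_distrib_left)
    finally show ?thesis .
  qed
  have "(\<Sum>i\<le>N. \<Sum>\<eta>\<in>L i. (wj i * P g \<eta>) powr q) \<le> (\<Sum>i\<le>N. \<Sum>k\<le>i. \<Sum>\<xi>\<in>L k. wj i powr q * (D g \<xi> * (Cs * S i / S k)))"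
    by (rule sum_mono) (rule lev)
  also have "\<dots> = (\<Sum>k\<le>N. \<Sum>i\<in>{k..N}. \<Sum>\<xi>\<in>L k. wj i powr q * (D g \<xi> * (Cs * S i / S k)))"
    by (rule sum_triangle_swap)
  also have "\<dots> = (\<Sum>k\<le>N. Cs * (\<Sum>\<xi>\<in>L k. D g \<xi> * T N k / S k))"
  proof (rule sum.cong[OF refl])
    fix k
    have "(\<Sum>i\<in>{k..N}. \<Sum>\<xi>\<in>L k. wj i powr q * (D g \<xi> * (Cs * S i / S k)))
        = (\<Sum>\<xi>\<in>L k. \<Sum>i\<in>{k..N}. (Cs * D g \<xi> / S k) * (wj i powr q * S i))"
      by (subst sum.swap) (simp add: mult_ac)
    also have "\<dots> = (\<Sum>\<xi>\<in>L k. (Cs * D g \<xi> / S k) * T N k)"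
      by (simp add: T_def sum_distrib_left)
    also have "\<dots> = Cs * (\<Sum>\<xi>\<in>L k. D g \<xi> * T N k / S k)"
      by (simp add: sum_distrib_left mult_ac)
    finally show "(\<Sum>i\<in>{k..N}. \<Sum>\<xi>\<in>L k. wj i powr q * (D g \<xi> * (Cs * S i / S k))) = Cs * (\<Sum>\<xi>\<in>L k. D g \<xi> * T N k / S k)" .
  qed
  also have "\<dots> = Cs * (\<Sum>k\<le>N. \<Sum>\<xi>\<in>L k. D g \<xi> * T N k / S k)"
    by (simp add: sum_distrib_left)
  finally show ?thesis .
qed

lemma K_nonneg: "(\<And>x. g x \<ge> 0) \<Longrightarrow> K g \<xi> \<ge> 0"
  unfolding K_def by (auto intro!: sum_nonneg)

lemma Snn: "S i \<ge> 0" using Spos[of i] by simp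

lemma T_nonneg: "T N k \<ge> 0"
  unfolding T_def using Snn by (intro sum_nonneg mult_nonneg_nonneg) auto

lemma T_mono: "j \<le> k \<Longrightarrow> T N k \<le> T N j"
  unfolding T_def using Snn by (intro sum_mono2) (auto intro: mult_nonneg_nonneg)

lemma C4:
  assumes g: "\<And>x. g x \<ge> 0" and b: "b \<ge> 0"
    and Hb: "\<And>j N. uj j powr q * (T N j / S j) \<le> b powr q"
    and \<xi>: "\<xi> \<in> L k"
  shows "D g \<xi> * (T N k / S k) \<le> q * b powr q * (g \<xi> * K g \<xi> powr (q - 1))"
proof -
  have dx: "dep \<xi> = k" using \<xi> unfolding L_eq by simp
  define t where "t = T N k / S k"
  have t0: "t \<ge> 0" unfolding t_def using T_nonneg Spos[of k] by simp
  have h1: "uj j * t powr (1/q) \<le> b * (S j / S k) powr (1/q)" if j: "j \<le> k" for j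
  proof -
    have "uj j powr q * t = (uj j powr q * (T N k / S j)) * (S j / S k)"
      unfolding t_def using Spos[of j] by simp
    also have "\<dots> \<le> (uj j powr q * (T N j / S j)) * (S j / S k)"
      using T_mono[OF j] Spos[of j] Spos[of k]
      by (intro mult_right_mono mult_left_mono divide_right_mono) auto
    also have "\<dots> \<le> b powr q * (S j / S k)"
      using Hb Spos[of j] Spos[of k] by (intro mult_right_mono) auto
    finally have le: "uj j powr q * t \<le> b powr q * (S j / S k)" .
    have "(uj j powr q * t) powr (1/q) \<le> (b powr q * (S j / S k)) powr (1/q)"
      using le t0 q1 by (intro powr_mono2) auto
    moreover have "(uj j powr q * t) powr (1/q) = uj j * t powr (1/q)"
      using ujnn[of j] q1 by (simp add: powr_mult powr_powr)
    moreover have "(b powr q * (S j / S k)) powr (1/q) = b * (S j / S k) powr (1/q)"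
      using b q1 by (simp only: powr_mult powr_powr) simp
    ultimately show ?thesis by simp
  qed
  have h2: "t powr (1/q) * P g \<xi> \<le> b * K g \<xi>"
  proof -
    have "t powr (1/q) * P g \<xi> = (\<Sum>j\<le>k. (uj j * t powr (1/q)) * g ((par ^^ (k - j)) \<xi>))"
      unfolding P_def dx by (simp add: sum_distrib_left mult_ac)
    also have "\<dots> \<le> (\<Sum>j\<le>k. (b * (S j / S k) powr (1/q)) * g ((par ^^ (k - j)) \<xi>))"
      using h1 g by (intro sum_mono mult_right_mono) auto
    also have "\<dots> = b * K g \<xi>"
      unfolding K_def dx by (simp add: sum_distrib_left mult_ac)
    finally show ?thesis .
  qed
  have Pn: "P g \<xi> \<ge> 0" using P_nonneg[OF g] .
  have id: "P g \<xi> powr (q - 1) * (uj k * g \<xi>) * t = g \<xi> * ((uj k * t powr (1/q)) * (t powr (1/q) * P g \<xi>) powr (q - 1))"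
  proof -
    have "t powr (1/q) * (t powr (1/q)) powr (q - 1) = t powr (1/q + 1/q * (q - 1))"
      by (simp add: powr_powr powr_add)
    also have "1/q + 1/q * (q - 1) = 1" using q1 by (simp add: field_simps)
    finally have "t powr (1/q) * (t powr (1/q)) powr (q - 1) = t" using t0 by simp
    then show ?thesis by (simp add: powr_mult mult_ac)
  qed
  have "D g \<xi> * t \<le> q * P g \<xi> powr (q - 1) * (uj k * g \<xi>) * t"
    using D_bounds(2)[OF g \<xi>] t0 by (intro mult_right_mono) auto
  also have "\<dots> = q * (g \<xi> * ((uj k * t powr (1/q)) * (t powr (1/q) * P g \<xi>) powr (q - 1)))"
    using id by (simp add: mult_ac)
  also have "\<dots> \<le> q * (g \<xi> * (b * (b * K g \<xi>) powr (q - 1)))"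
  proof -
    have a1: "uj k * t powr (1/q) \<le> b" using h1[of k] Spos[of k] by simp
    have a2: "(t powr (1/q) * P g \<xi>) powr (q - 1) \<le> (b * K g \<xi>) powr (q - 1)"
      using h2 Pn t0 q1 by (intro powr_mono2) auto
    have "(uj k * t powr (1/q)) * (t powr (1/q) * P g \<xi>) powr (q - 1) \<le> b * (b * K g \<xi>) powr (q - 1)"
      using a1 a2 b ujnn[of k] by (intro mult_mono) auto
    then show ?thesis using g[of \<xi>] q1 by (intro mult_left_mono) auto
  qed
  also have "\<dots> = q * b powr q * (g \<xi> * K g \<xi> powr (q - 1))"
  proof -
    have "b * b powr (q - 1) = b powr q" using b powr_add[of b 1 "q - 1"] by simp
    then show ?thesis using b K_nonneg[OF g] by (simp add: powr_mult mult_ac)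
  qed
  finally show ?thesis unfolding t_def .
qed

end

context consts_setting begin

definition "cp' = p / (p - 1)"
definition "cq' = q / (q - 1)"
definition "crr = (q - 1) * cp'"
definition "cs = q / crr"
definition "c\<theta> = (crr / q - 1) / 2"
definition "c\<epsilon> = c\<theta> / (crr - 1)"
definition "c\<beta>0 = R powr (- c\<theta>)"
definition "c\<beta>1 = R powr (- c\<epsilon>)"
definition "cA0 = 1 / (1 - c\<beta>1)"
definition "cC1 = cA0 powr (crr - 1) * Cs"
definition "c\<beta> = c\<beta>0 powr cs"
definition "cM1 = 1 / q + cC1 powr cs / cq' * (1 / (1 - c\<beta>))"

lemma cfacts:
  "cp' > 1" "1/p + 1/cp' = 1" "cq' > 1" "1/q + 1/cq' = 1"
  "crr > q" "crr > 1" "0 < cs" "cs \<le> 1" "c\<theta> > 0" "c\<epsilon> > 0"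
  "c\<epsilon> + (1/q - c\<epsilon>) * crr = 1 + c\<theta>" "cs = cq' / cp'" "crr * cs = q"
  "(q - 1) * cp' = crr"
proof -
  show cp: "cp' > 1" using p1 unfolding cp'_def by (simp add: field_simps)
  show "1/p + 1/cp' = 1" using p1 unfolding cp'_def by (simp add: field_simps)
  show "cq' > 1" using q1 unfolding cq'_def by (simp add: field_simps)
  show "1/q + 1/cq' = 1" using q1 unfolding cq'_def by (simp add: field_simps)
  have "(q - 1) * p > q * (p - 1)" using pq by (simp add: algebra_simps)
  then show rq: "crr > q" unfolding crr_def cp'_def using p1 by (simp add: field_simps)
  then show r1: "crr > 1" using q1 by simp
  show "0 < cs" unfolding cs_def using rq q1 by simp
  show "cs \<le> 1" unfolding cs_def using rq q1 by simp
  show th: "c\<theta> > 0" unfolding c\<theta>_def using rq q1 by (simp add: field_simps)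
  show "c\<epsilon> > 0" unfolding c\<epsilon>_def using th r1 by simp
  have e1: "c\<epsilon> * (crr - 1) = c\<theta>" unfolding c\<epsilon>_def using r1 by simp
  have e2: "crr / q = 1 + 2 * c\<theta>" unfolding c\<theta>_def by (simp add: field_simps)
  have "c\<epsilon> + (1/q - c\<epsilon>) * crr = crr / q - c\<epsilon> * (crr - 1)" by (simp add: algebra_simps)
  then show "c\<epsilon> + (1/q - c\<epsilon>) * crr = 1 + c\<theta>" using e1 e2 by linarith
  show "cs = cq' / cp'" unfolding cs_def cq'_def crr_def using p1 q1 cp by (simp add: field_simps)
  show "crr * cs = q" unfolding cs_def using rq q1 by simp
  show "(q - 1) * cp' = crr" unfolding crr_def by simp
qed

lemma beta_consts: "0 < c\<beta>0" "c\<beta>0 < 1" "0 < c\<beta>1" "c\<beta>1 < 1" "cA0 > 0" "0 < c\<beta>" "c\<beta> < 1"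
  "cC1 > 0"
proof -
  show "0 < c\<beta>0" "0 < c\<beta>1" unfolding c\<beta>0_def c\<beta>1_def using R1 by auto
  show b0: "c\<beta>0 < 1" unfolding c\<beta>0_def using R1 cfacts by (intro powr_less_one) auto
  show b1: "c\<beta>1 < 1" unfolding c\<beta>1_def using R1 cfacts by (intro powr_less_one) auto
  show "cA0 > 0" unfolding cA0_def using b1 by simp
  then show "cC1 > 0" unfolding cC1_def using Cs1 by simp
  show "0 < c\<beta>" unfolding c\<beta>_def using \<open>0 < c\<beta>0\<close> by simp
  show "c\<beta> < 1" unfolding c\<beta>_def using \<open>0 < c\<beta>0\<close> b0 cfacts powr_less_mono2[of cs c\<beta>0 1]
    by simp
qed

end

context hardy_setting begin

lemma sigma_pow: "j \<le> k \<Longrightarrow> a > 0 \<Longrightarrow> (S j / S k) powr a \<le> (R powr (-a)) ^ (k - j)"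
proof -
  assume jk: "j \<le> k" and a: "a > 0"
  have "(S j / S k) powr a \<le> ((1/R) ^ (k - j)) powr a"
    using S_growth[OF jk] Spos[of j] Spos[of k] a by (intro powr_mono2) auto
  also have "\<dots> = ((1/R) powr a) ^ (k - j)" using R1 by (simp add: powr_power_real)
  also have "(1/R) powr a = R powr (-a)" using R1 by (simp add: powr_minus_divide powr_divide)
  finally show ?thesis .
qed

definition G :: "(nat \<Rightarrow> real) \<Rightarrow> nat \<Rightarrow> real" where
  "G g k = (\<Sum>\<xi>\<in>L k. g \<xi> powr p)"
definition Y :: "(nat \<Rightarrow> real) \<Rightarrow> nat \<Rightarrow> real" where
  "Y g k = (\<Sum>\<xi>\<in>L k. K g \<xi> powr crr)"

lemma G_nonneg: "G g k \<ge> 0" unfolding G_def by (auto intro: sum_nonneg)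
lemma Y_nonneg: "Y g k \<ge> 0" unfolding Y_def by (auto intro: sum_nonneg)

lemma C5a:
  assumes g: "\<And>x. g x \<ge> 0"
  shows "(\<Sum>\<xi>\<in>L k. g \<xi> * K g \<xi> powr (q - 1)) \<le> G g k powr (1/p) * Y g k powr (1/cp')"
proof -
  have "(\<Sum>\<xi>\<in>L k. g \<xi> * K g \<xi> powr (q - 1)) \<le>
      (\<Sum>\<xi>\<in>L k. g \<xi> powr p) powr (1/p) * (\<Sum>\<xi>\<in>L k. (K g \<xi> powr (q - 1)) powr cp') powr (1/cp')"
    by (rule holder_sum) (use finL g p1 cfacts in auto)
  also have "(\<Sum>\<xi>\<in>L k. (K g \<xi> powr (q - 1)) powr cp') = Y g k"
    unfolding Y_def using cfacts by (simp add: powr_powr)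
  finally show ?thesis unfolding G_def .
qed

lemma C5b_point:
  assumes g: "\<And>x. g x \<ge> 0" and \<xi>: "\<xi> \<in> L k"
  shows "K g \<xi> powr crr \<le> cA0 powr (crr - 1) * (\<Sum>j\<le>k. (S j / S k) powr (1 + c\<theta>) * g ((par ^^ (k - j)) \<xi>) powr crr)"
proof -
  have dx: "dep \<xi> = k" using \<xi> unfolding L_eq by simp
  define \<sigma> where "\<sigma> j = S j / S k" for j
  define x where "x j = g ((par ^^ (k - j)) \<xi>)" for j
  have \<sigma>p: "\<sigma> j > 0" for j unfolding \<sigma>_def using Spos[of j] Spos[of k] by simp
  have x0: "x j \<ge> 0" for j unfolding x_def using g by simp
  define \<alpha> where "\<alpha> j = \<sigma> j powr c\<epsilon>" for j
  define y where "y j = \<sigma> j powr (1/q - c\<epsilon>) * x j" for j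
  have Keq: "K g \<xi> = (\<Sum>j\<le>k. \<alpha> j * y j)"
  proof -
    have "\<alpha> j * y j = \<sigma> j powr (1/q) * x j" for j
      unfolding \<alpha>_def y_def by (simp add: mult.assoc[symmetric] powr_add[symmetric])
    then show ?thesis unfolding K_def dx \<sigma>_def x_def by simp
  qed
  have "K g \<xi> powr crr \<le> (\<Sum>j\<le>k. \<alpha> j) powr (crr - 1) * (\<Sum>j\<le>k. \<alpha> j * y j powr crr)"
    unfolding Keq by (rule power_mean_sum) (use x0 cfacts in \<open>auto simp: \<alpha>_def y_def\<close>)
  also have "\<dots> \<le> cA0 powr (crr - 1) * (\<Sum>j\<le>k. \<alpha> j * y j powr crr)"
  proof (rule mult_right_mono)
    have "(\<Sum>j\<le>k. \<alpha> j) \<le> (\<Sum>j\<le>k. c\<beta>1 ^ (k - j))"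
      unfolding \<alpha>_def \<sigma>_def c\<beta>1_def using sigma_pow cfacts by (intro sum_mono) auto
    also have "\<dots> \<le> cA0" unfolding cA0_def by (rule geo_sum_rev_le) (use beta_consts in auto)
    finally have "(\<Sum>j\<le>k. \<alpha> j) \<le> cA0" .
    then show "(\<Sum>j\<le>k. \<alpha> j) powr (crr - 1) \<le> cA0 powr (crr - 1)"
      using cfacts by (intro powr_mono2) (auto simp: \<alpha>_def intro: sum_nonneg)
    show "0 \<le> (\<Sum>j\<le>k. \<alpha> j * y j powr crr)" by (auto simp: \<alpha>_def intro!: sum_nonneg)
  qed
  also have "(\<Sum>j\<le>k. \<alpha> j * y j powr crr) = (\<Sum>j\<le>k. (S j / S k) powr (1 + c\<theta>) * g ((par ^^ (k - j)) \<xi>) powr crr)"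
  proof (rule sum.cong[OF refl])
    fix j
    have "\<alpha> j * y j powr crr = \<sigma> j powr (c\<epsilon> + (1/q - c\<epsilon>) * crr) * x j powr crr"
      unfolding \<alpha>_def y_def using x0 \<sigma>p by (simp add: powr_mult powr_powr powr_add mult_ac)
    then show "\<alpha> j * y j powr crr = (S j / S k) powr (1 + c\<theta>) * g ((par ^^ (k - j)) \<xi>) powr crr"
      using cfacts unfolding \<sigma>_def x_def by simp
  qed
  finally show ?thesis .
qed

lemma lr_le_lp:
  assumes g: "\<And>x. g x \<ge> 0"
  shows "(\<Sum>\<zeta>\<in>L j. g \<zeta> powr crr) \<le> G g j powr (crr / p)"
proof -
  have pr: "0 < p / crr" "p / crr \<le> 1" using cfacts p1 pq by auto
  have "(\<Sum>\<zeta>\<in>L j. g \<zeta> powr crr) powr (p / crr) \<le> (\<Sum>\<zeta>\<in>L j. (g \<zeta> powr crr) powr (p / crr))"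
    by (rule powr_subadd_sum) (use finL pr in auto)
  also have "\<dots> = G g j" unfolding G_def using cfacts by (simp add: powr_powr)
  finally have le: "(\<Sum>\<zeta>\<in>L j. g \<zeta> powr crr) powr (p / crr) \<le> G g j" .
  have nn: "0 \<le> (\<Sum>\<zeta>\<in>L j. g \<zeta> powr crr)" by (auto intro: sum_nonneg)
  have "(\<Sum>\<zeta>\<in>L j. g \<zeta> powr crr) = ((\<Sum>\<zeta>\<in>L j. g \<zeta> powr crr) powr (p / crr)) powr (crr / p)"
    using nn cfacts p1 by (simp add: powr_powr)
  also have "\<dots> \<le> G g j powr (crr / p)"
    using le cfacts p1 by (intro powr_mono2) auto
  finally show ?thesis .
qed

lemma C5b:
  assumes g: "\<And>x. g x \<ge> 0"
  shows "Y g k \<le> cC1 * (\<Sum>j\<le>k. c\<beta>0 ^ (k - j) * G g j powr (crr / p))"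
proof -
  have "Y g k \<le> (\<Sum>\<xi>\<in>L k. cA0 powr (crr - 1) * (\<Sum>j\<le>k. (S j / S k) powr (1 + c\<theta>) * g ((par ^^ (k - j)) \<xi>) powr crr))"
    unfolding Y_def by (rule sum_mono) (rule C5b_point[OF g])
  also have "\<dots> = cA0 powr (crr - 1) * (\<Sum>j\<le>k. (S j / S k) powr (1 + c\<theta>) * (\<Sum>\<xi>\<in>L k. g ((par ^^ (k - j)) \<xi>) powr crr))"
    by (simp add: sum_distrib_left sum.swap[of _ "L k"])
  also have "\<dots> \<le> cA0 powr (crr - 1) * (\<Sum>j\<le>k. Cs * (c\<beta>0 ^ (k - j) * G g j powr (crr / p)))"
  proof (intro mult_left_mono sum_mono)
    fix j assume j: "j \<in> {..k}"
    then have jk: "j \<le> k" by simp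
    have "(\<Sum>\<xi>\<in>L k. g ((par ^^ (k - j)) \<xi>) powr crr) = (\<Sum>\<zeta>\<in>L j. g \<zeta> powr crr * real (card (desc V par r \<zeta> (k - j))))"
      by (rule group_sum[OF finL finL jk])
    also have "\<dots> \<le> (\<Sum>\<zeta>\<in>L j. g \<zeta> powr crr * (Cs * S k / S j))"
      by (intro sum_mono mult_left_mono card_le) (use jk in auto)
    also have "\<dots> = (Cs * S k / S j) * (\<Sum>\<zeta>\<in>L j. g \<zeta> powr crr)"
      by (simp add: sum_distrib_left mult_ac)
    finally have A: "(\<Sum>\<xi>\<in>L k. g ((par ^^ (k - j)) \<xi>) powr crr) \<le> (Cs * S k / S j) * (\<Sum>\<zeta>\<in>L j. g \<zeta> powr crr)" .
    have sp: "(S j / S k) powr (1 + c\<theta>) * (Cs * S k / S j) = Cs * (S j / S k) powr c\<theta>"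
      using Spos[of j] Spos[of k] by (simp add: powr_add)
    have "(S j / S k) powr (1 + c\<theta>) * (\<Sum>\<xi>\<in>L k. g ((par ^^ (k - j)) \<xi>) powr crr)
        \<le> (S j / S k) powr (1 + c\<theta>) * ((Cs * S k / S j) * (\<Sum>\<zeta>\<in>L j. g \<zeta> powr crr))"
      using A by (intro mult_left_mono) auto
    also have "\<dots> = ((S j / S k) powr (1 + c\<theta>) * (Cs * S k / S j)) * (\<Sum>\<zeta>\<in>L j. g \<zeta> powr crr)"
      by (simp only: mult_ac)
    also have "\<dots> = Cs * ((S j / S k) powr c\<theta> * (\<Sum>\<zeta>\<in>L j. g \<zeta> powr crr))"
      unfolding sp by (simp only: mult_ac)
    also have "\<dots> \<le> Cs * (c\<beta>0 ^ (k - j) * G g j powr (crr / p))"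
    proof -
      have "(S j / S k) powr c\<theta> \<le> c\<beta>0 ^ (k - j)" unfolding c\<beta>0_def using sigma_pow[OF jk] cfacts by auto
      moreover have "(\<Sum>\<zeta>\<in>L j. g \<zeta> powr crr) \<le> G g j powr (crr / p)" by (rule lr_le_lp[OF g])
      ultimately show ?thesis using Cs1 beta_consts
        by (intro mult_left_mono mult_mono) (auto intro: sum_nonneg)
    qed
    finally show "(S j / S k) powr (1 + c\<theta>) * (\<Sum>\<xi>\<in>L k. g ((par ^^ (k - j)) \<xi>) powr crr)
        \<le> Cs * (c\<beta>0 ^ (k - j) * G g j powr (crr / p))" .
  qed simp
  also have "\<dots> = cC1 * (\<Sum>j\<le>k. c\<beta>0 ^ (k - j) * G g j powr (crr / p))"
    unfolding cC1_def by (simp add: sum_distrib_left mult_ac)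
  finally show ?thesis .
qed

lemma C5_level:
  assumes g: "\<And>x. g x \<ge> 0"
  shows "(\<Sum>\<xi>\<in>L k. g \<xi> * K g \<xi> powr (q - 1)) \<le>
     G g k powr (q / p) / q + cC1 powr cs / cq' * (\<Sum>j\<le>k. c\<beta> ^ (k - j) * G g j powr (q / p))"
proof -
  have "(\<Sum>\<xi>\<in>L k. g \<xi> * K g \<xi> powr (q - 1)) \<le> G g k powr (1/p) * Y g k powr (1/cp')"
    by (rule C5a[OF g])
  also have "\<dots> \<le> (G g k powr (1/p)) powr q / q + (Y g k powr (1/cp')) powr cq' / cq'"
    by (rule Youngs_inequality) (use q1 cfacts in auto)
  also have "(G g k powr (1/p)) powr q = G g k powr (q / p)" by (simp add: powr_powr)
  also have "(Y g k powr (1/cp')) powr cq' = Y g k powr cs" using cfacts by (simp add: powr_powr)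
  also have "Y g k powr cs \<le> cC1 powr cs * (\<Sum>j\<le>k. c\<beta> ^ (k - j) * G g j powr (q / p))"
  proof -
    have nn: "0 \<le> (\<Sum>j\<le>k. c\<beta>0 ^ (k - j) * G g j powr (crr / p))"
      using beta_consts by (auto intro!: sum_nonneg)
    have "Y g k powr cs \<le> (cC1 * (\<Sum>j\<le>k. c\<beta>0 ^ (k - j) * G g j powr (crr / p))) powr cs"
      using C5b[OF g] Y_nonneg cfacts by (intro powr_mono2) auto
    also have "\<dots> = cC1 powr cs * (\<Sum>j\<le>k. c\<beta>0 ^ (k - j) * G g j powr (crr / p)) powr cs"
      by (simp add: powr_mult)
    also have "\<dots> \<le> cC1 powr cs * (\<Sum>j\<le>k. (c\<beta>0 ^ (k - j) * G g j powr (crr / p)) powr cs)"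
      using beta_consts cfacts by (intro mult_left_mono powr_subadd_sum) auto
    also have "(\<Sum>j\<le>k. (c\<beta>0 ^ (k - j) * G g j powr (crr / p)) powr cs) = (\<Sum>j\<le>k. c\<beta> ^ (k - j) * G g j powr (q / p))"
    proof (rule sum.cong[OF refl])
      fix j
      have "(crr / p) * cs = q / p" using cfacts by (simp add: field_simps)
      then show "(c\<beta>0 ^ (k - j) * G g j powr (crr / p)) powr cs = c\<beta> ^ (k - j) * G g j powr (q / p)"
        unfolding c\<beta>_def using beta_consts cfacts(13) by (simp add: powr_mult powr_power_real powr_powr)
    qed
    finally show ?thesis .
  qed
  finally show ?thesis using cfacts by (simp add: divide_right_mono)
qed

lemma C5:
  assumes g: "\<And>x. g x \<ge> 0"
  shows "(\<Sum>k\<le>N. \<Sum>\<xi>\<in>L k. g \<xi> * K g \<xi> powr (q - 1)) \<le> cM1 * (\<Sum>k\<le>N. G g k powr (q / p))"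
proof -
  have "(\<Sum>k\<le>N. \<Sum>\<xi>\<in>L k. g \<xi> * K g \<xi> powr (q - 1)) \<le>
     (\<Sum>k\<le>N. G g k powr (q / p) / q + cC1 powr cs / cq' * (\<Sum>j\<le>k. c\<beta> ^ (k - j) * G g j powr (q / p)))"
    by (rule sum_mono) (rule C5_level[OF g])
  also have "\<dots> = (\<Sum>k\<le>N. G g k powr (q / p)) / q + cC1 powr cs / cq' * (\<Sum>k\<le>N. \<Sum>j\<le>k. c\<beta> ^ (k - j) * G g j powr (q / p))"
    by (simp add: sum.distrib sum_divide_distrib sum_distrib_left)
  also have "\<dots> \<le> (\<Sum>k\<le>N. G g k powr (q / p)) / q + cC1 powr cs / cq' * (1 / (1 - c\<beta>) * (\<Sum>j\<le>N. G g j powr (q / p)))"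
    using beta_consts cfacts by (intro add_left_mono mult_left_mono geo_double_sum) auto
  also have "\<dots> = cM1 * (\<Sum>k\<le>N. G g k powr (q / p))"
    unfolding cM1_def by (simp add: algebra_simps)
  finally show ?thesis .
qed

end

lemma infsum_ennreal_SUP: "infsum (f :: _ \<Rightarrow> ennreal) A = (SUP F\<in>{F. finite F \<and> F \<subseteq> A}. sum f F)"
  by (rule nonneg_infsum_complete) simp

lemma sum_le_infsum_ennreal: "finite F \<Longrightarrow> F \<subseteq> A \<Longrightarrow> sum (f :: _ \<Rightarrow> ennreal) F \<le> infsum f A"
  unfolding infsum_ennreal_SUP by (rule SUP_upper) auto

lemma infsum_cmult_ennreal: "infsum (\<lambda>x. c * (f x :: ennreal)) A = c * infsum f A"
  unfolding infsum_ennreal_SUP SUP_mult_left_ennreal by (simp add: sum_distrib_left)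

lemma infsum_mono_set_ennreal: "A \<subseteq> B \<Longrightarrow> infsum (f :: _ \<Rightarrow> ennreal) A \<le> infsum f B"
  unfolding infsum_ennreal_SUP by (rule SUP_subset_mono) auto

lemma infsum_mono_ennreal: "(\<And>x. x \<in> A \<Longrightarrow> f x \<le> g x) \<Longrightarrow> infsum (f :: _ \<Rightarrow> ennreal) A \<le> infsum g A"
  unfolding infsum_ennreal_SUP by (rule SUP_mono) (auto intro!: sum_mono)

lemma enn_powr_ennreal: "0 \<le> x \<Longrightarrow> enn_powr (ennreal x) a = ennreal (x powr a)"
  unfolding enn_powr_def by simp

lemma enn_powr_top: "enn_powr top a = top"
  unfolding enn_powr_def by simp

lemma enn_powr_mono: assumes "x \<le> y" "a > 0" shows "enn_powr x a \<le> enn_powr y a"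
proof (cases "y = top")
  case True then show ?thesis by (simp add: enn_powr_top)
next
  case False
  then have "x \<noteq> top" using assms top_unique by auto
  then obtain x' y' where xy: "x = ennreal x'" "y = ennreal y'" "0 \<le> x'" "0 \<le> y'"
    using False by (metis ennreal_cases)
  then have "x' \<le> y'" using assms by simp
  then show ?thesis using xy assms by (simp add: enn_powr_ennreal powr_mono2)
qed

lemma enn_powr_cmult:
  assumes c: "c \<ge> 0" and a: "a > 0"
  shows "enn_powr (ennreal c * x) a = ennreal (c powr a) * enn_powr x a"
proof (cases "x = top")
  case True
  show ?thesis
  proof (cases "c = 0")
    case True2: True
    then show ?thesis using \<open>x = top\<close> by (simp add: enn_powr_def)
  next
    case False
    then have "ennreal c * x = top" using True c by (simp add: ennreal_mult_top)
    moreover have "ennreal (c powr a) \<noteq> 0" using False c by simp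
    ultimately show ?thesis using True by (simp add: enn_powr_top)
  qed
next
  case False
  then obtain y where y: "x = ennreal y" "y \<ge> 0" by (metis ennreal_cases top.not_eq_extremum)
  have e: "ennreal c * x = ennreal (c * y)" using y c by (simp add: ennreal_mult)
  have "enn_powr (ennreal (c * y)) a = ennreal ((c * y) powr a)"
    using c y by (intro enn_powr_ennreal) simp
  also have "\<dots> = ennreal (c powr a) * ennreal (y powr a)" by (simp add: powr_mult ennreal_mult)
  also have "ennreal (y powr a) = enn_powr x a" using y by (simp add: enn_powr_ennreal)
  finally show ?thesis unfolding e .
qed


context consts_setting begin

definition "cM0 = Cs * q * cM1"

lemma cM1_pos: "cM1 > 0"
  unfolding cM1_def using q1 beta_consts cfacts by (intro add_pos_nonneg) auto

lemma cM0_pos: "cM0 > 0" unfolding cM0_def using cM1_pos Cs1 q1 by simp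

end

context hardy_setting begin

lemma core_finite:
  assumes g: "\<And>x. g x \<ge> 0" and b: "b \<ge> 0"
    and Hb: "\<And>j N. uj j powr q * (T N j / S j) \<le> b powr q"
  shows "(\<Sum>i\<le>N. \<Sum>\<eta>\<in>L i. (wj i * P g \<eta>) powr q) \<le> cM0 * b powr q * (\<Sum>k\<le>N. G g k powr (q / p))"
proof -
  have "(\<Sum>i\<le>N. \<Sum>\<eta>\<in>L i. (wj i * P g \<eta>) powr q) \<le> Cs * (\<Sum>k\<le>N. \<Sum>\<xi>\<in>L k. D g \<xi> * T N k / S k)"
    by (rule sum_levels_le[OF g])
  also have "\<dots> \<le> Cs * (\<Sum>k\<le>N. \<Sum>\<xi>\<in>L k. q * b powr q * (g \<xi> * K g \<xi> powr (q - 1)))"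
    using C4[OF g b Hb] Cs1 by (intro mult_left_mono sum_mono) (auto simp: mult.assoc)
  also have "\<dots> = Cs * q * b powr q * (\<Sum>k\<le>N. \<Sum>\<xi>\<in>L k. g \<xi> * K g \<xi> powr (q - 1))"
    by (simp add: sum_distrib_left mult_ac)
  also have "\<dots> \<le> Cs * q * b powr q * (cM1 * (\<Sum>k\<le>N. G g k powr (q / p)))"
    using C5[OF g] Cs1 q1 by (intro mult_left_mono) auto
  also have "\<dots> = cM0 * b powr q * (\<Sum>k\<le>N. G g k powr (q / p))"
    unfolding cM0_def by (simp add: mult_ac)
  finally show ?thesis .
qed

lemma mixed_eq:
  "mixed_norm V par r p q f = enn_powr (\<Sum>\<^sub>\<infinity>j\<in>(UNIV::nat set). ennreal (G (\<lambda>x. \<bar>f x\<bar>) j powr (q / p))) (1 / q)"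
proof -
  have "\<And>j. enn_powr (\<Sum>\<^sub>\<infinity>\<xi>\<in>L j. ennreal (\<bar>f \<xi>\<bar> powr p)) (q / p) = ennreal (G (\<lambda>x. \<bar>f x\<bar>) j powr (q / p))"
    using finL by (simp add: G_def enn_powr_ennreal sum_nonneg)
  then show ?thesis unfolding mixed_norm_def by simp
qed

end

locale hardy_uw = hardy_setting +
  fixes u w :: "nat \<Rightarrow> real"
  assumes uw: "\<And>\<xi>. \<xi> \<in> V \<Longrightarrow> u \<xi> = uj (dep \<xi>) \<and> w \<xi> = wj (dep \<xi>)"
begin

lemma hardy_bound:
  assumes \<eta>: "\<eta> \<in> L i"
  shows "\<bar>hardy_op par r u w f \<eta>\<bar> \<le> wj i * P (\<lambda>x. \<bar>f x\<bar>) \<eta>"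
proof -
  have eV: "\<eta> \<in> V" and di: "dep \<eta> = i" using \<eta> unfolding L_eq by auto
  have "hardy_op par r u w f \<eta> = wj i * (\<Sum>j\<le>i. uj j * f ((par ^^ (i - j)) \<eta>))"
  proof -
    have "(\<Sum>x\<in>ancestors par r \<eta>. u x * f x) = (\<Sum>j\<le>i. u ((par ^^ (i - j)) \<eta>) * f ((par ^^ (i - j)) \<eta>))"
      using ancestors_sum[OF eV] di by simp
    also have "\<dots> = (\<Sum>j\<le>i. uj j * f ((par ^^ (i - j)) \<eta>))"
    proof (rule sum.cong[OF refl])
      fix j assume "j \<in> {..i}"
      then have "(par ^^ (i - j)) \<eta> \<in> V" "dep ((par ^^ (i - j)) \<eta>) = j"
        using anc[OF eV, of "i - j"] di by auto
      then show "u ((par ^^ (i - j)) \<eta>) * f ((par ^^ (i - j)) \<eta>) = uj j * f ((par ^^ (i - j)) \<eta>)"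
        using uw by simp
    qed
    finally show ?thesis unfolding hardy_op_def using uw[OF eV] di by simp
  qed
  also have "\<bar>\<dots>\<bar> \<le> wj i * (\<Sum>j\<le>i. uj j * \<bar>f ((par ^^ (i - j)) \<eta>)\<bar>)"
  proof -
    have "\<bar>\<Sum>j\<le>i. uj j * f ((par ^^ (i - j)) \<eta>)\<bar> \<le> (\<Sum>j\<le>i. \<bar>uj j * f ((par ^^ (i - j)) \<eta>)\<bar>)"
      by (rule sum_abs)
    also have "\<dots> = (\<Sum>j\<le>i. uj j * \<bar>f ((par ^^ (i - j)) \<eta>)\<bar>)" using ujnn by (simp add: abs_mult)
    finally show ?thesis using wjnn[of i] by (simp add: abs_mult mult_left_mono)
  qed
  also have "\<dots> = wj i * P (\<lambda>x. \<bar>f x\<bar>) \<eta>" unfolding P_def di ..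
  finally show ?thesis .
qed

lemma Hb_from_B1:
  assumes b: "b \<ge> 0"
    and B1b: "\<And>j. ennreal (uj j) * enn_powr (\<Sum>\<^sub>\<infinity>i\<in>{j..}. ennreal (wj i powr q * S i / S j)) (1 / q) \<le> ennreal b"
  shows "uj j powr q * (T N j / S j) \<le> b powr q"
proof -
  define X where "X = (\<Sum>\<^sub>\<infinity>i\<in>{j..}. ennreal (wj i powr q * S i / S j))"
  have TX: "ennreal (T N j / S j) \<le> X"
  proof -
    have "ennreal (T N j / S j) = (\<Sum>i\<in>{j..N}. ennreal (wj i powr q * S i / S j))"
      unfolding T_def using Snn by (simp add: sum_divide_distrib sum_nonneg)
    also have "\<dots> \<le> X" unfolding X_def by (rule sum_le_infsum_ennreal) auto
    finally show ?thesis .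
  qed
  show ?thesis
  proof (cases "uj j = 0")
    case True then show ?thesis by simp
  next
    case False
    then have ujp: "uj j > 0" using ujnn[of j] by simp
    have B: "ennreal (uj j) * enn_powr X (1 / q) \<le> ennreal b" using B1b[of j] unfolding X_def .
    have Xt: "X \<noteq> top"
    proof
      assume "X = top"
      then have "ennreal (uj j) * enn_powr X (1 / q) = top" using ujp by (simp add: enn_powr_top)
      then show False using B by (simp add: top_unique)
    qed
    then obtain x where x: "X = ennreal x" "x \<ge> 0" by (metis ennreal_cases top.not_eq_extremum)
    have "ennreal (uj j * x powr (1/q)) \<le> ennreal b"
      using B x ujnn[of j] by (simp add: enn_powr_ennreal ennreal_mult)
    then have ub: "uj j * x powr (1/q) \<le> b" using b by simp
    have "(uj j * x powr (1/q)) powr q \<le> b powr q"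
      using ub ujnn[of j] q1 by (intro powr_mono2) auto
    then have ux: "uj j powr q * x \<le> b powr q"
      using x q1 by (simp add: powr_mult powr_powr)
    have "T N j / S j \<le> x" using TX x T_nonneg Snn[of j] by simp
    then have "uj j powr q * (T N j / S j) \<le> uj j powr q * x" by (intro mult_left_mono) auto
    then show ?thesis using ux by simp
  qed
qed

lemma upper_f:
  assumes b: "b \<ge> 0"
    and Hb: "\<And>j N. uj j powr q * (T N j / S j) \<le> b powr q"
    and fin: "mixed_norm V par r p q f < top"
  shows "lq_norm V q (hardy_op par r u w f) \<le> ennreal (cM0 powr (1/q) * b) * mixed_norm V par r p q f"
proof -
  define g where "g x = \<bar>f x\<bar>" for x
  have g: "\<And>x. g x \<ge> 0" unfolding g_def by simp
  define X where "X = (\<Sum>\<^sub>\<infinity>j\<in>(UNIV::nat set). ennreal (G g j powr (q / p)))"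
  have mx: "mixed_norm V par r p q f = enn_powr X (1 / q)" unfolding X_def g_def by (rule mixed_eq)
  have Xt: "X \<noteq> top" using fin unfolding mx by (auto simp: enn_powr_top)
  then obtain x where x: "X = ennreal x" "x \<ge> 0" by (metis ennreal_cases top.not_eq_extremum)
  define h where "h \<eta> = \<bar>hardy_op par r u w f \<eta>\<bar> powr q" for \<eta>
  have h0: "h \<eta> \<ge> 0" for \<eta> unfolding h_def by simp
  have Yle: "(\<Sum>\<^sub>\<infinity>\<eta>\<in>V. ennreal (h \<eta>)) \<le> ennreal (cM0 * b powr q * x)"
  proof (rule infsum_le_finite_sums)
    show "(\<lambda>\<eta>. ennreal (h \<eta>)) summable_on V" by (rule nonneg_summable_on_complete) simp
    fix F assume F: "finite F" "F \<subseteq> V"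
    define N where "N = Max (insert 0 (dep ` F))"
    have dN: "dep x \<le> N" if "x \<in> F" for x unfolding N_def using F that by (intro Max_ge) auto
    have "(\<Sum>\<eta>\<in>F. h \<eta>) = (\<Sum>i\<in>{..N}. \<Sum>\<eta>\<in>{x. x \<in> F \<and> dep x = i}. h \<eta>)"
      by (rule sum.group[symmetric]) (use F dN in auto)
    also have "\<dots> \<le> (\<Sum>i\<le>N. \<Sum>\<eta>\<in>L i. h \<eta>)"
    proof (rule sum_mono)
      fix i
      show "(\<Sum>\<eta>\<in>{x. x \<in> F \<and> dep x = i}. h \<eta>) \<le> (\<Sum>\<eta>\<in>L i. h \<eta>)"
        by (rule sum_mono2[OF finL]) (use F h0 in \<open>auto simp: L_eq\<close>)
    qed
    also have "\<dots> \<le> (\<Sum>i\<le>N. \<Sum>\<eta>\<in>L i. (wj i * P g \<eta>) powr q)"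
    proof (intro sum_mono)
      fix i \<eta> assume "\<eta> \<in> L i"
      then show "h \<eta> \<le> (wj i * P g \<eta>) powr q"
        unfolding h_def using hardy_bound[of \<eta> i f] q1 unfolding g_def
        by (intro powr_mono2) auto
    qed
    also have "\<dots> \<le> cM0 * b powr q * (\<Sum>k\<le>N. G g k powr (q / p))"
      by (rule core_finite[OF g b Hb])
    also have "\<dots> \<le> cM0 * b powr q * x"
    proof -
      have "ennreal (\<Sum>k\<le>N. G g k powr (q / p)) = (\<Sum>k\<le>N. ennreal (G g k powr (q / p)))"
        by (simp add: sum_nonneg)
      also have "\<dots> \<le> X" unfolding X_def by (rule sum_le_infsum_ennreal) auto
      finally have "(\<Sum>k\<le>N. G g k powr (q / p)) \<le> x" using x by simp
      then show ?thesis using cM0_pos by (intro mult_left_mono) auto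
    qed
    finally have "(\<Sum>\<eta>\<in>F. h \<eta>) \<le> cM0 * b powr q * x" .
    then show "(\<Sum>\<eta>\<in>F. ennreal (h \<eta>)) \<le> ennreal (cM0 * b powr q * x)"
      using h0 by (simp add: sum_nonneg ennreal_leI)
  qed
  have "lq_norm V q (hardy_op par r u w f) = enn_powr (\<Sum>\<^sub>\<infinity>\<eta>\<in>V. ennreal (h \<eta>)) (1 / q)"
    unfolding lq_norm_def h_def ..
  also have "\<dots> \<le> enn_powr (ennreal (cM0 * b powr q * x)) (1 / q)"
    using Yle q1 by (intro enn_powr_mono) auto
  also have "\<dots> = ennreal ((cM0 * b powr q * x) powr (1 / q))"
    using cM0_pos x by (intro enn_powr_ennreal) simp
  also have "(cM0 * b powr q * x) powr (1 / q) = (cM0 powr (1/q) * b) * x powr (1 / q)"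
    using cM0_pos x b q1 by (simp add: powr_mult powr_powr)
  also have "ennreal (cM0 powr (1/q) * b * x powr (1 / q)) = ennreal (cM0 powr (1/q) * b) * ennreal (x powr (1 / q))"
    using b by (intro ennreal_mult) auto
  also have "ennreal (x powr (1 / q)) = mixed_norm V par r p q f"
    unfolding mx x using x by (simp add: enn_powr_ennreal)
  finally show ?thesis .
qed

lemma upper:
  assumes b: "b \<ge> 0"
    and B1b: "\<And>j. ennreal (uj j) * enn_powr (\<Sum>\<^sub>\<infinity>i\<in>{j..}. ennreal (wj i powr q * S i / S j)) (1 / q) \<le> ennreal b"
  shows "op_norm V par r p q u w \<le> ennreal (cM0 powr (1/q) * b)"
  unfolding op_norm_def
  by (rule Inf_lower) (use upper_f[OF b Hb_from_B1[OF b B1b]] in auto)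

end

context hardy_uw begin

lemma u_nn: "\<xi> \<in> V \<Longrightarrow> u \<xi> \<ge> 0" using uw ujnn by simp

lemma lower_B2:
  assumes \<xi>: "\<xi> \<in> V"
  shows "ennreal (u \<xi>) * lq_norm (subtree V par r \<xi>) q w \<le> op_norm V par r p q u w"
  unfolding op_norm_def
proof (rule Inf_greatest)
  fix C assume "C \<in> {C. \<forall>f. mixed_norm V par r p q f < top \<longrightarrow>
       lq_norm V q (hardy_op par r u w f) \<le> C * mixed_norm V par r p q f}"
  then have C: "\<And>f. mixed_norm V par r p q f < top \<Longrightarrow>
       lq_norm V q (hardy_op par r u w f) \<le> C * mixed_norm V par r p q f" by blast
  define \<delta> where "\<delta> x = (if x = \<xi> then 1 else (0::real))" for x
  have G\<delta>: "G (\<lambda>x. \<bar>\<delta> x\<bar>) j = (if j = dep \<xi> then 1 else 0)" for j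
  proof -
    have "G (\<lambda>x. \<bar>\<delta> x\<bar>) j = (\<Sum>x\<in>L j. if x = \<xi> then 1 else 0)"
      unfolding G_def \<delta>_def by (intro sum.cong) auto
    also have "\<dots> = (if \<xi> \<in> L j then 1 else 0)" using finL by simp
    also have "\<dots> = (if j = dep \<xi> then 1 else 0)" using \<xi> unfolding L_eq by auto
    finally show ?thesis .
  qed
  have m1: "mixed_norm V par r p q \<delta> = 1"
  proof -
    have "(\<Sum>\<^sub>\<infinity>j\<in>(UNIV::nat set). ennreal (G (\<lambda>x. \<bar>\<delta> x\<bar>) j powr (q / p)))
        = (\<Sum>\<^sub>\<infinity>j\<in>{dep \<xi>}. ennreal (G (\<lambda>x. \<bar>\<delta> x\<bar>) j powr (q / p)))"
      by (rule infsum_cong_neutral) (auto simp: G\<delta>)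
    also have "\<dots> = 1" by (simp add: G\<delta>)
    finally show ?thesis unfolding mixed_eq by (simp add: enn_powr_ennreal[of 1, simplified])
  qed
  have le1: "lq_norm V q (hardy_op par r u w \<delta>) \<le> C" using C[of \<delta>] m1 by simp
  define Z where "Z = (\<Sum>\<^sub>\<infinity>\<eta>\<in>subtree V par r \<xi>. ennreal (\<bar>w \<eta>\<bar> powr q))"
  have hs: "hardy_op par r u w \<delta> \<eta> = w \<eta> * u \<xi>" if \<eta>: "\<eta> \<in> subtree V par r \<xi>" for \<eta>
  proof -
    have "(\<Sum>x\<in>ancestors par r \<eta>. u x * \<delta> x) = (\<Sum>x\<in>ancestors par r \<eta>. if x = \<xi> then u \<xi> else 0)"
      unfolding \<delta>_def by (intro sum.cong) auto
    also have "\<dots> = u \<xi>" using subtree_anc[OF \<eta>] finite_ancestors by simp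
    finally show ?thesis unfolding hardy_op_def by simp
  qed
  have "ennreal (u \<xi> powr q) * Z = (\<Sum>\<^sub>\<infinity>\<eta>\<in>subtree V par r \<xi>. ennreal (u \<xi> powr q) * ennreal (\<bar>w \<eta>\<bar> powr q))"
    unfolding Z_def by (rule infsum_cmult_ennreal[symmetric])
  also have "\<dots> = (\<Sum>\<^sub>\<infinity>\<eta>\<in>subtree V par r \<xi>. ennreal (\<bar>hardy_op par r u w \<delta> \<eta>\<bar> powr q))"
  proof (rule infsum_cong)
    fix \<eta> assume \<eta>: "\<eta> \<in> subtree V par r \<xi>"
    show "ennreal (u \<xi> powr q) * ennreal (\<bar>w \<eta>\<bar> powr q) = ennreal (\<bar>hardy_op par r u w \<delta> \<eta>\<bar> powr q)"
      using u_nn[OF \<xi>] by (simp add: hs[OF \<eta>] abs_mult powr_mult ennreal_mult[symmetric] mult.commute)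
  qed
  also have "\<dots> \<le> (\<Sum>\<^sub>\<infinity>\<eta>\<in>V. ennreal (\<bar>hardy_op par r u w \<delta> \<eta>\<bar> powr q))"
    by (rule infsum_mono_set_ennreal[OF subtree_sub])
  finally have ZZ: "ennreal (u \<xi> powr q) * Z \<le> (\<Sum>\<^sub>\<infinity>\<eta>\<in>V. ennreal (\<bar>hardy_op par r u w \<delta> \<eta>\<bar> powr q))" .
  have "ennreal (u \<xi>) * lq_norm (subtree V par r \<xi>) q w = enn_powr (ennreal (u \<xi> powr q) * Z) (1 / q)"
    unfolding lq_norm_def Z_def using u_nn[OF \<xi>] q1
    by (simp add: enn_powr_cmult powr_powr)
  also have "\<dots> \<le> lq_norm V q (hardy_op par r u w \<delta>)"
    unfolding lq_norm_def using ZZ q1 by (intro enn_powr_mono) auto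
  also have "\<dots> \<le> C" by (rule le1)
  finally show "ennreal (u \<xi>) * lq_norm (subtree V par r \<xi>) q w \<le> C" .
qed

lemma B1_le_B2:
  assumes \<xi>: "\<xi> \<in> L j"
  shows "ennreal (uj j) * enn_powr (\<Sum>\<^sub>\<infinity>i\<in>{j..}. ennreal (wj i powr q * S i / S j)) (1 / q)
     \<le> ennreal (Cs powr (1/q)) * (ennreal (u \<xi>) * lq_norm (subtree V par r \<xi>) q w)"
proof -
  have \<xi>V: "\<xi> \<in> V" and dx: "dep \<xi> = j" using \<xi> unfolding L_eq by auto
  define Z where "Z = (\<Sum>\<^sub>\<infinity>\<eta>\<in>subtree V par r \<xi>. ennreal (\<bar>w \<eta>\<bar> powr q))"
  have key: "(\<Sum>\<^sub>\<infinity>i\<in>{j..}. ennreal (wj i powr q * S i / S j)) \<le> ennreal Cs * Z"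
  proof (rule infsum_le_finite_sums)
    show "(\<lambda>i. ennreal (wj i powr q * S i / S j)) summable_on {j..}"
      by (rule nonneg_summable_on_complete) simp
    fix F assume F: "finite F" "F \<subseteq> {j..}"
    define N where "N = Max (insert j F)"
    have FN: "F \<subseteq> {j..N}" unfolding N_def using F by (auto intro: Max_ge)
    define U where "U = (\<Union>i\<in>{j..N}. desc V par r \<xi> (i - j))"
    have fin_desc: "finite (desc V par r \<xi> m)" for m
      using desc_sub_L finL finite_subset by blast
    have depU: "\<eta> \<in> desc V par r \<xi> (i - j) \<Longrightarrow> j \<le> i \<Longrightarrow> dep \<eta> = i \<and> \<eta> \<in> V" for \<eta> i
      unfolding desc_def dx by auto
    have sumU: "(\<Sum>\<eta>\<in>U. \<bar>w \<eta>\<bar> powr q) = (\<Sum>i\<in>{j..N}. wj i powr q * real (card (desc V par r \<xi> (i - j))))"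
    proof -
      have "(\<Sum>\<eta>\<in>U. \<bar>w \<eta>\<bar> powr q) = (\<Sum>i\<in>{j..N}. \<Sum>\<eta>\<in>desc V par r \<xi> (i - j). \<bar>w \<eta>\<bar> powr q)"
        unfolding U_def
      proof (rule sum.UNION_disjoint)
        show "\<forall>i\<in>{j..N}. \<forall>i'\<in>{j..N}. i \<noteq> i' \<longrightarrow> desc V par r \<xi> (i - j) \<inter> desc V par r \<xi> (i' - j) = {}"
        proof (intro ballI impI)
          fix i i' assume ii: "i \<in> {j..N}" "i' \<in> {j..N}" "i \<noteq> i'"
          show "desc V par r \<xi> (i - j) \<inter> desc V par r \<xi> (i' - j) = {}"
          proof (rule ccontr)
            assume "desc V par r \<xi> (i - j) \<inter> desc V par r \<xi> (i' - j) \<noteq> {}"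
            then obtain \<eta> where "\<eta> \<in> desc V par r \<xi> (i - j)" "\<eta> \<in> desc V par r \<xi> (i' - j)" by blast
            then have "dep \<eta> = i" "dep \<eta> = i'" using depU ii by auto
            then show False using ii by simp
          qed
        qed
      qed (auto simp: fin_desc)
      also have "\<dots> = (\<Sum>i\<in>{j..N}. wj i powr q * real (card (desc V par r \<xi> (i - j))))"
      proof (rule sum.cong[OF refl])
        fix i assume i: "i \<in> {j..N}"
        have "(\<Sum>\<eta>\<in>desc V par r \<xi> (i - j). \<bar>w \<eta>\<bar> powr q) = (\<Sum>\<eta>\<in>desc V par r \<xi> (i - j). wj i powr q)"
          using depU i uw wjnn by (intro sum.cong) auto
        then show "(\<Sum>\<eta>\<in>desc V par r \<xi> (i - j). \<bar>w \<eta>\<bar> powr q) = wj i powr q * real (card (desc V par r \<xi> (i - j)))"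
          by (simp add: mult.commute)
      qed
      finally show ?thesis .
    qed
    have UZ: "ennreal (\<Sum>\<eta>\<in>U. \<bar>w \<eta>\<bar> powr q) \<le> Z"
    proof -
      have "ennreal (\<Sum>\<eta>\<in>U. \<bar>w \<eta>\<bar> powr q) = (\<Sum>\<eta>\<in>U. ennreal (\<bar>w \<eta>\<bar> powr q))" by simp
      also have "\<dots> \<le> Z" unfolding Z_def
        by (rule sum_le_infsum_ennreal) (auto simp: U_def subtree_def fin_desc)
      finally show ?thesis .
    qed
    have "(\<Sum>i\<in>F. ennreal (wj i powr q * S i / S j)) \<le> (\<Sum>i\<in>{j..N}. ennreal (wj i powr q * S i / S j))"
      by (rule sum_mono2) (use FN in auto)
    also have "\<dots> = ennreal (\<Sum>i\<in>{j..N}. wj i powr q * S i / S j)"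
      using Snn by (simp add: sum_nonneg)
    also have "\<dots> \<le> ennreal (Cs * (\<Sum>i\<in>{j..N}. wj i powr q * real (card (desc V par r \<xi> (i - j)))))"
    proof (rule ennreal_leI)
      have "wj i powr q * S i / S j \<le> Cs * (wj i powr q * real (card (desc V par r \<xi> (i - j))))"
        if i: "i \<in> {j..N}" for i
      proof -
        have "S i / (Cs * S j) \<le> real (card (desc V par r \<xi> (i - j)))" using card_ge[OF \<xi>] i by simp
        then have "S i / S j \<le> Cs * real (card (desc V par r \<xi> (i - j)))"
          using Cs1 Spos[of j] by (simp add: divide_le_eq field_simps)
        then have "wj i powr q * (S i / S j) \<le> wj i powr q * (Cs * real (card (desc V par r \<xi> (i - j))))"
          by (intro mult_left_mono) auto
        then show ?thesis by (simp add: mult_ac)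
      qed
      then show "(\<Sum>i\<in>{j..N}. wj i powr q * S i / S j) \<le> Cs * (\<Sum>i\<in>{j..N}. wj i powr q * real (card (desc V par r \<xi> (i - j))))"
        unfolding sum_distrib_left by (rule sum_mono) simp
    qed
    also have "\<dots> = ennreal Cs * ennreal (\<Sum>\<eta>\<in>U. \<bar>w \<eta>\<bar> powr q)"
      unfolding sumU[symmetric] using Cs1 by (intro ennreal_mult) (auto intro: sum_nonneg)
    also have "\<dots> \<le> ennreal Cs * Z" using UZ by (rule mult_left_mono) simp
    finally show "(\<Sum>i\<in>F. ennreal (wj i powr q * S i / S j)) \<le> ennreal Cs * Z" .
  qed
  have "ennreal (uj j) * enn_powr (\<Sum>\<^sub>\<infinity>i\<in>{j..}. ennreal (wj i powr q * S i / S j)) (1 / q)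
      \<le> ennreal (uj j) * enn_powr (ennreal Cs * Z) (1 / q)"
    using key q1 by (intro mult_left_mono enn_powr_mono) auto
  also have "\<dots> = ennreal (Cs powr (1/q)) * (ennreal (u \<xi>) * lq_norm (subtree V par r \<xi>) q w)"
  proof -
    have "enn_powr (ennreal Cs * Z) (1 / q) = ennreal (Cs powr (1/q)) * enn_powr Z (1 / q)"
      using Cs1 q1 by (intro enn_powr_cmult) auto
    then show ?thesis unfolding lq_norm_def Z_def[symmetric] using uw[OF \<xi>V] dx
      by (simp add: mult_ac)
  qed
  finally show ?thesis .
qed

end

theorem theorem2:
  fixes p q Cs R R0 :: real
  assumes "1 < p" "p < q" "Cs \<ge> 1" "R > 1" "R0 \<ge> R"
  shows "\<exists>c1 c2 :: real. c1 > 0 \<and> c2 > 0 \<and>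
    (\<forall>(V :: nat set) par r (u :: nat \<Rightarrow> real) (w :: nat \<Rightarrow> real) uj wj (S :: nat \<Rightarrow> real).
      rooted_tree V par r \<longrightarrow>
      (\<forall>j. uj j \<ge> 0 \<and> wj j \<ge> 0) \<longrightarrow>
      (\<forall>\<xi>\<in>V. u \<xi> = uj (depth par r \<xi>) \<and> w \<xi> = wj (depth par r \<xi>)) \<longrightarrow>
      (\<forall>j. S j > 0) \<longrightarrow>
      (\<forall>j. \<forall>\<xi>\<in>desc V par r r j. \<forall>j'\<ge>j.
          S j' / (Cs * S j) \<le> real (card (desc V par r \<xi> (j' - j))) \<and>
          real (card (desc V par r \<xi> (j' - j))) \<le> Cs * S j' / S j) \<longrightarrow>
      S 0 = 1 \<longrightarrow>
      (\<forall>j. S (Suc j) / S j \<le> R0 \<and> R \<le> S (Suc j) / S j) \<longrightarrow>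
      (let A = op_norm V par r p q u w;
           B1 = (SUP j. ennreal (uj j) *
                   enn_powr (\<Sum>\<^sub>\<infinity>i\<in>{j..}. ennreal (wj i powr q * S i / S j)) (1 / q));
           B2 = (SUP \<xi>\<in>V. ennreal (u \<xi>) * lq_norm (subtree V par r \<xi>) q w)
       in ennreal c1 * B1 \<le> A \<and> A \<le> ennreal c2 * B1 \<and>
          ennreal c1 * B2 \<le> A \<and> A \<le> ennreal c2 * B2))"
proof -
  have CS: "consts_setting Cs R p q" unfolding consts_setting_def using assms by auto
  define M where "M = consts_setting.cM0 Cs R p q"
  have Mp: "M > 0" unfolding M_def by (rule consts_setting.cM0_pos[OF CS])
  have q1: "q > 1" using assms by simp
  have Csq: "Cs powr (1/q) \<le> Cs" using powr_mono[of "1/q" 1 Cs] assms q1 by simp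
  have Csq0: "Cs powr (1/q) \<ge> 0" by simp
  define c1 where "c1 = 1 / Cs"
  define c2 where "c2 = M powr (1/q) * Cs"
  have c1p: "c1 > 0" "c1 \<le> 1" unfolding c1_def using assms by auto
  have c2p: "c2 > 0" unfolding c2_def using Mp assms by simp
  show ?thesis
  proof (intro exI conjI allI impI)
    show "c1 > 0" "c2 > 0" using c1p c2p by auto
    fix V par r and u w :: "nat \<Rightarrow> real" and uj wj and S :: "nat \<Rightarrow> real"
    assume tr: "rooted_tree V par r"
      and nn: "\<forall>j. uj j \<ge> 0 \<and> wj j \<ge> 0"
      and uwh: "\<forall>\<xi>\<in>V. u \<xi> = uj (depth par r \<xi>) \<and> w \<xi> = wj (depth par r \<xi>)"
      and Sp: "\<forall>j. S j > 0"
      and cb: "\<forall>j. \<forall>\<xi>\<in>desc V par r r j. \<forall>j'\<ge>j.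
          S j' / (Cs * S j) \<le> real (card (desc V par r \<xi> (j' - j))) \<and>
          real (card (desc V par r \<xi> (j' - j))) \<le> Cs * S j' / S j"
      and S0: "S 0 = 1"
      and rat: "\<forall>j. S (Suc j) / S j \<le> R0 \<and> R \<le> S (Suc j) / S j"
    interpret H: hardy_uw V par r Cs R p q uj wj S u w
      unfolding hardy_uw_def hardy_uw_axioms_def hardy_setting_def hardy_setting_axioms_def tree_setting_def
      using tr nn uwh Sp cb S0 rat CS by auto
    define A where "A = op_norm V par r p q u w"
    define B1 where "B1 = (SUP j. ennreal (uj j) *
                   enn_powr (\<Sum>\<^sub>\<infinity>i\<in>{j..}. ennreal (wj i powr q * S i / S j)) (1 / q))"
    define B2 where "B2 = (SUP \<xi>\<in>V. ennreal (u \<xi>) * lq_norm (subtree V par r \<xi>) q w)"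
    have B2A: "B2 \<le> A" unfolding B2_def A_def by (rule SUP_least) (rule H.lower_B2)
    have B12: "B1 \<le> ennreal (Cs powr (1/q)) * B2"
      unfolding B1_def
    proof (rule SUP_least)
      fix j
      obtain \<xi> where \<xi>: "\<xi> \<in> desc V par r r j" using H.L_ne[of j] by blast
      have \<xi>V: "\<xi> \<in> V" using \<xi> unfolding H.L_eq by simp
      have "ennreal (uj j) * enn_powr (\<Sum>\<^sub>\<infinity>i\<in>{j..}. ennreal (wj i powr q * S i / S j)) (1 / q)
         \<le> ennreal (Cs powr (1/q)) * (ennreal (u \<xi>) * lq_norm (subtree V par r \<xi>) q w)"
        by (rule H.B1_le_B2[OF \<xi>])
      also have "\<dots> \<le> ennreal (Cs powr (1/q)) * B2"
        unfolding B2_def by (intro mult_left_mono SUP_upper \<xi>V) simp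
      finally show "ennreal (uj j) * enn_powr (\<Sum>\<^sub>\<infinity>i\<in>{j..}. ennreal (wj i powr q * S i / S j)) (1 / q)
         \<le> ennreal (Cs powr (1/q)) * B2" .
    qed
    have AB1: "A \<le> ennreal (M powr (1/q)) * B1"
    proof (cases "B1 = top")
      case True
      have "ennreal (M powr (1/q)) \<noteq> 0" using Mp by simp
      then show ?thesis using True by simp
    next
      case False
      then obtain b where b: "B1 = ennreal b" "b \<ge> 0" by (metis ennreal_cases top.not_eq_extremum)
      have "A \<le> ennreal (M powr (1/q) * b)"
        unfolding A_def M_def
      proof (rule H.upper[OF b(2)])
        fix j
        show "ennreal (uj j) * enn_powr (\<Sum>\<^sub>\<infinity>i\<in>{j..}. ennreal (wj i powr q * S i / S j)) (1 / q) \<le> ennreal b"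
          unfolding b(1)[symmetric] B1_def by (rule SUP_upper) simp
      qed
      then show ?thesis using b by (simp add: ennreal_mult)
    qed
    have g1: "ennreal c1 * B1 \<le> A"
    proof -
      have "ennreal c1 * B1 \<le> ennreal c1 * (ennreal (Cs powr (1/q)) * B2)"
        using B12 by (rule mult_left_mono) simp
      also have "\<dots> = ennreal (c1 * Cs powr (1/q)) * B2"
        using c1p by (simp add: ennreal_mult mult.assoc)
      also have "\<dots> \<le> 1 * B2"
      proof (rule mult_right_mono)
        have "c1 * Cs powr (1/q) \<le> c1 * Cs" using Csq c1p by (intro mult_left_mono) auto
        also have "c1 * Cs = 1" unfolding c1_def using assms by simp
        finally show "ennreal (c1 * Cs powr (1/q)) \<le> 1" by (simp add: ennreal_leI[of _ 1, simplified])
      qed simp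
      also have "\<dots> \<le> A" using B2A by simp
      finally show ?thesis .
    qed
    have g2: "A \<le> ennreal c2 * B1"
    proof -
      have "ennreal (M powr (1/q)) \<le> ennreal c2"
        unfolding c2_def using assms by (intro ennreal_leI) (simp add: mult_le_cancel_left1)
      then have "ennreal (M powr (1/q)) * B1 \<le> ennreal c2 * B1" by (rule mult_right_mono) simp
      then show ?thesis using AB1 by simp
    qed
    have g3: "ennreal c1 * B2 \<le> A"
    proof -
      have "ennreal c1 * B2 \<le> 1 * B2" using c1p by (intro mult_right_mono) (auto simp: ennreal_leI[of _ 1, simplified])
      then show ?thesis using B2A by simp
    qed
    have g4: "A \<le> ennreal c2 * B2"
    proof -
      have "A \<le> ennreal (M powr (1/q)) * (ennreal (Cs powr (1/q)) * B2)"
        using AB1 B12 by (meson mult_left_mono order_trans zero_le)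
      also have "\<dots> = ennreal (M powr (1/q) * Cs powr (1/q)) * B2"
        by (simp add: ennreal_mult mult.assoc)
      also have "\<dots> \<le> ennreal c2 * B2"
        unfolding c2_def using Csq Mp by (intro mult_right_mono ennreal_leI mult_left_mono) auto
      finally show ?thesis .
    qed
    show "let A = op_norm V par r p q u w;
           B1 = (SUP j. ennreal (uj j) *
                   enn_powr (\<Sum>\<^sub>\<infinity>i\<in>{j..}. ennreal (wj i powr q * S i / S j)) (1 / q));
           B2 = (SUP \<xi>\<in>V. ennreal (u \<xi>) * lq_norm (subtree V par r \<xi>) q w)
       in ennreal c1 * B1 \<le> A \<and> A \<le> ennreal c2 * B1 \<and>
          ennreal c1 * B2 \<le> A \<and> A \<le> ennreal c2 * B2"
      using g1 g2 g3 g4 unfolding A_def B1_def B2_def Let_def by blast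
  qed
qed


end
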